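(* Let $T$ be a complete first-order theory with monster model $\mathcal{U}$. The relation $\geq_{\mathbb{E}}$ on the collection of global Keisler measures (in finitely many variables) is a preorder; that is, for all global Keisler measures $\mu,\nu,\eta$: $\mu\geq_{\mathbb{E}}\mu$, and if $\mu\geq_{\mathbb{E}}\nu$ and $\nu\geq_{\mathbb{E}}\eta$ then $\mu\geq_{\mathbb{E}}\eta$.
   Context: "Small" means of cardinality less than the saturation of $\mathcal{U}$. For $B\subseteq\mathcal{U}$ and a finite tuple of variables $x$, $\mathcal{L}_x(B)$ is the Boolean algebra of formulas in free variables $x$ with parameters from $B$ modulo $T$-equivalence; $\mathcal{L}_x(B)$ is identified with a subalgebra of $\mathcal{L}_{xy}(B)$ via $\varphi(x)\mapsto\varphi(x)\wedge y=y$. A Keisler measure over $B$ in $x$ is a finitely additive probability measure on $\mathcal{L}_x(B)$; $\mathfrak{M}_x(B)$ denotes the set of these; global means over $\mathcal{U}$. For $\omega\in\mathfrak{M}_{xy}(B)$, $\pi_x(\omega)(\varphi(x))=\omega(\varphi(x)\wedge y=y)$ (similarly $\pi_y$), and $\omega|_C$ is restriction to $\mathcal{L}_{xy}(C)$. For $\mu\in\mathfrak{M}_x(\mathcal{U})$, $\nu\in\mathfrak{M}_y(\mathcal{U})$ ($x,y$ disjoint) and small $A$: $\mu\geq_{\mathbb{E},A}\nu$ means there is $\lambda\in\mathfrak{M}_{xy}(A)$ with $\pi_x(\lambda)=\mu|_A$ such that every $\omega\in\mathfrak{M}_{xy}(\mathcal{U})$ with $\omega|_A=\lambda$ and $\pi_x(\omega)=\mu$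 satisfies $\pi_y(\omega)=\nu$. $\mu\geq_{\mathbb{E}}\nu$ means $\mu\geq_{\mathbb{E},A}\nu$ for some small $A$. As a relation on global measures, $\mu\geq_{\mathbb{E}}\nu$ is evaluated after writing $\mu$ and $\nu$ in distinct (disjoint) tuples of variables (so in particular $\mu\geq_{\mathbb{E}}\mu$ means $\mu(x)\geq_{\mathbb{E}}\mu(y)$ for a copy $y$ of $x$). *)

theory Defs
  imports Complex_Main
begin

datatype ('f, 'u) trm = Var nat | Par 'u | App 'f "('f, 'u) trm list"

datatype ('f, 'r, 'u) fm =
    FEq "('f, 'u) trm" "('f, 'u) trm"
  | FRel 'r "('f, 'u) trm list"
  | FNeg "('f, 'r, 'u) fm"
  | FConj "('f, 'r, 'u) fm" "('f, 'r, 'u) fm"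
  | FEx nat "('f, 'r, 'u) fm"

type_synonym ('f, 'r, 'u) struc = "('f \<Rightarrow> 'u list \<Rightarrow> 'u) \<times> ('r \<Rightarrow> 'u list \<Rightarrow> bool)"

fun eval_t :: "('f, 'r, 'u) struc \<Rightarrow> (nat \<Rightarrow> 'u) \<Rightarrow> ('f, 'u) trm \<Rightarrow> 'u" where
  "eval_t S e (Var i) = e i"
| "eval_t S e (Par a) = a"
| "eval_t S e (App f ts) = fst S f (map (eval_t S e) ts)"

fun sat :: "('f, 'r, 'u) struc \<Rightarrow> (nat \<Rightarrow> 'u) \<Rightarrow> ('f, 'r, 'u) fm \<Rightarrow> bool" where
  "sat S e (FEq s t) = (eval_t S e s = eval_t S e t)"
| "sat S e (FRel R ts) = snd S R (map (eval_t S e) ts)"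
| "sat S e (FNeg \<phi>) = (\<not> sat S e \<phi>)"
| "sat S e (FConj \<phi> \<psi>) = (sat S e \<phi> \<and> sat S e \<psi>)"
| "sat S e (FEx i \<phi>) = (\<exists>a. sat S (e(i := a)) \<phi>)"

fun fv_t :: "('f, 'u) trm \<Rightarrow> nat set" where
  "fv_t (Var i) = {i}"
| "fv_t (Par a) = {}"
| "fv_t (App f ts) = (\<Union>t\<in>set ts. fv_t t)"

fun par_t :: "('f, 'u) trm \<Rightarrow> 'u set" where
  "par_t (Var i) = {}"
| "par_t (Par a) = {a}"
| "par_t (App f ts) = (\<Union>t\<in>set ts. par_t t)"

fun fv :: "('f, 'r, 'u) fm \<Rightarrow> nat set" where
  "fv (FEq s t) = fv_t s \<union> fv_t t"
| "fv (FRel R ts) = (\<Union>t\<in>set ts. fv_t t)"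
| "fv (FNeg \<phi>) = fv \<phi>"
| "fv (FConj \<phi> \<psi>) = fv \<phi> \<union> fv \<psi>"
| "fv (FEx i \<phi>) = fv \<phi> - {i}"

fun params :: "('f, 'r, 'u) fm \<Rightarrow> 'u set" where
  "params (FEq s t) = par_t s \<union> par_t t"
| "params (FRel R ts) = (\<Union>t\<in>set ts. par_t t)"
| "params (FNeg \<phi>) = params \<phi>"
| "params (FConj \<phi> \<psi>) = params \<phi> \<union> params \<psi>"
| "params (FEx i \<phi>) = params \<phi>"

(* \<phi> is a formula in the free variables x = (x_0,...,x_{n-1}) (= Var 0..Var (n-1))
   with parameters from B *)
definition fm_in :: "nat \<Rightarrow> 'u set \<Rightarrow> ('f, 'r, 'u) fm \<Rightarrow> bool" where
  "fm_in n B \<phi> \<longleftrightarrow> fv \<phi> \<subseteq> {..<n} \<and> params \<phi> \<subseteq> B"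

definition saturated :: "('f, 'r, 'u) struc \<Rightarrow> 'k rel \<Rightarrow> bool" where
  "saturated S \<kappa> \<longleftrightarrow>
     (\<forall>(A :: 'u set) n (p :: ('f, 'r, 'u) fm set).
        ordLess2 (card_of A) \<kappa> \<and> (\<forall>\<phi>\<in>p. fm_in n A \<phi>) \<and>
        (\<forall>q\<subseteq>p. finite q \<longrightarrow> (\<exists>v. length v = n \<and> (\<forall>\<phi>\<in>q. sat S (\<lambda>i. v ! i) \<phi>)))
        \<longrightarrow> (\<exists>v. length v = n \<and> (\<forall>\<phi>\<in>p. sat S (\<lambda>i. v ! i) \<phi>)))"

definition automorphism :: "('f, 'r, 'u) struc \<Rightarrow> ('u \<Rightarrow> 'u) \<Rightarrow> bool" where
  "automorphism S \<sigma> \<longleftrightarrow> bij \<sigma> \<and>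
     (\<forall>F as. \<sigma> (fst S F as) = fst S F (map \<sigma> as)) \<and>
     (\<forall>R as. snd S R (map \<sigma> as) = snd S R as)"

definition elementary_on :: "('f, 'r, 'u) struc \<Rightarrow> 'u set \<Rightarrow> ('u \<Rightarrow> 'u) \<Rightarrow> bool" where
  "elementary_on S A f \<longleftrightarrow>
     (\<forall>(\<phi> :: ('f, 'r, 'u) fm) e. params \<phi> = {} \<and> (\<forall>i\<in>fv \<phi>. e i \<in> A) \<longrightarrow>
        (sat S e \<phi> \<longleftrightarrow> sat S (f \<circ> e) \<phi>))"

definition strongly_homogeneous :: "('f, 'r, 'u) struc \<Rightarrow> 'k rel \<Rightarrow> bool" where
  "strongly_homogeneous S \<kappa> \<longleftrightarrow>
     (\<forall>A f. ordLess2 (card_of A) \<kappa> \<and> elementary_on S A f \<longrightarrow>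
        (\<exists>\<sigma>. automorphism S \<sigma> \<and> (\<forall>a\<in>A. \<sigma> a = f a)))"

(* S is a monster model (of its complete theory T = Th(S)) with respect to the
   cardinal kappa, which is bigger than |T| = |L| + aleph_0 *)
definition monster :: "('f, 'r, 'u) struc \<Rightarrow> 'k rel \<Rightarrow> bool" where
  "monster S \<kappa> \<longleftrightarrow> Card_order \<kappa> \<and>
     ordLess2 (card_of (UNIV :: nat set)) \<kappa> \<and>
     ordLess2 (card_of (UNIV :: 'f set)) \<kappa> \<and>
     ordLess2 (card_of (UNIV :: 'r set)) \<kappa> \<and>
     saturated S \<kappa> \<and> strongly_homogeneous S \<kappa>"

definition small :: "'k rel \<Rightarrow> 'u set \<Rightarrow> bool" where
  "small \<kappa> A \<longleftrightarrow> ordLess2 (card_of A) \<kappa>"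

(* L_x(B) for |x| = n, realised (modulo equivalence in the monster model, i.e.
   modulo T-equivalence) as the Boolean algebra of B-definable subsets of U^n;
   n-tuples are lists of length n. *)
definition defset :: "('f, 'r, 'u) struc \<Rightarrow> nat \<Rightarrow> ('f, 'r, 'u) fm \<Rightarrow> 'u list set" where
  "defset S n \<phi> = {v. length v = n \<and> sat S (\<lambda>i. v ! i) \<phi>}"

definition Defs :: "('f, 'r, 'u) struc \<Rightarrow> nat \<Rightarrow> 'u set \<Rightarrow> 'u list set set" where
  "Defs S n B = {defset S n \<phi> | \<phi>. fm_in n B \<phi>}"

(* Keisler measure over B in n variables: finitely additive probability measure on
   L_x(B); normalised to be 0 on sets outside the algebra, so that equality of
   measures is equality of functions. *)
definition keisler :: "('f, 'r, 'u) struc \<Rightarrow> nat \<Rightarrow> 'u set \<Rightarrow> ('u list set \<Rightarrow> real) \<Rightarrow> bool" where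
  "keisler S n B \<mu> \<longleftrightarrow>
     \<mu> {v. length v = n} = 1 \<and>
     (\<forall>X\<in>Defs S n B. 0 \<le> \<mu> X) \<and>
     (\<forall>X\<in>Defs S n B. \<forall>Y\<in>Defs S n B. X \<inter> Y = {} \<longrightarrow> \<mu> (X \<union> Y) = \<mu> X + \<mu> Y) \<and>
     (\<forall>X. X \<notin> Defs S n B \<longrightarrow> \<mu> X = 0)"

definition restr :: "('f, 'r, 'u) struc \<Rightarrow> nat \<Rightarrow> 'u set \<Rightarrow> ('u list set \<Rightarrow> real) \<Rightarrow> ('u list set \<Rightarrow> real)" where
  "restr S n A \<mu> = (\<lambda>X. if X \<in> Defs S n A then \<mu> X else 0)"

(* variables xy = (x_0..x_{n-1}, y_0..y_{m-1}); tuples are v @ w *)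
definition pi_x :: "('f, 'r, 'u) struc \<Rightarrow> nat \<Rightarrow> nat \<Rightarrow> 'u set \<Rightarrow> ('u list set \<Rightarrow> real) \<Rightarrow> ('u list set \<Rightarrow> real)" where
  "pi_x S n m B \<omega> = (\<lambda>X. if X \<in> Defs S n B
      then \<omega> {v @ w | v w. v \<in> X \<and> length w = m} else 0)"

definition pi_y :: "('f, 'r, 'u) struc \<Rightarrow> nat \<Rightarrow> nat \<Rightarrow> 'u set \<Rightarrow> ('u list set \<Rightarrow> real) \<Rightarrow> ('u list set \<Rightarrow> real)" where
  "pi_y S n m B \<omega> = (\<lambda>Y. if Y \<in> Defs S m B
      then \<omega> {v @ w | v w. length v = n \<and> w \<in> Y} else 0)"

definition geEA :: "('f, 'r, 'u) struc \<Rightarrow> 'u set \<Rightarrow> nat \<Rightarrow> nat \<Rightarrow>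
    ('u list set \<Rightarrow> real) \<Rightarrow> ('u list set \<Rightarrow> real) \<Rightarrow> bool" where
  "geEA S A n m \<mu> \<nu> \<longleftrightarrow>
     (\<exists>lam. keisler S (n + m) A lam \<and> pi_x S n m A lam = restr S n A \<mu> \<and>
        (\<forall>\<omega>. keisler S (n + m) UNIV \<omega> \<and> restr S (n + m) A \<omega> = lam \<and>
             pi_x S n m UNIV \<omega> = \<mu> \<longrightarrow> pi_y S n m UNIV \<omega> = \<nu>))"

definition geE :: "('f, 'r, 'u) struc \<Rightarrow> 'k rel \<Rightarrow> nat \<Rightarrow> nat \<Rightarrow>
    ('u list set \<Rightarrow> real) \<Rightarrow> ('u list set \<Rightarrow> real) \<Rightarrow> bool" where
  "geE S \<kappa> n m \<mu> \<nu> \<longleftrightarrow> (\<exists>A. small \<kappa> A \<and> geEA S A n m \<mu> \<nu>)"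

end

theory Submission
  imports Defs "HOL-Analysis.Analysis"
begin


lemma eval_t_cong: "(\<forall>i\<in>fv_t t. e i = e' i) \<Longrightarrow> eval_t S e t = eval_t S e' t"
proof (induction t)
  case (App f ts)
  have "map (eval_t S e) ts = map (eval_t S e') ts"
    by (rule map_cong[OF refl]) (use App in auto)
  then show ?case by (simp only: eval_t.simps)
qed auto

lemma sat_cong: "(\<forall>i\<in>fv \<phi>. e i = e' i) \<Longrightarrow> sat S e \<phi> = sat S e' \<phi>"
proof (induction \<phi> arbitrary: e e')
  case (FEq s t) then show ?case using eval_t_cong[of s e e' S] eval_t_cong[of t e e' S] by auto
next
  case (FRel R ts)
  have "map (eval_t S e) ts = map (eval_t S e') ts"
    by (rule map_cong[OF refl]) (use FRel.prems in \<open>auto intro: eval_t_cong\<close>)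
  then show ?case by (simp only: sat.simps)
next
  case (FEx i \<phi>)
  have "\<And>a. sat S (e(i:=a)) \<phi> = sat S (e'(i:=a)) \<phi>"
    using FEx.IH FEx.prems by auto
  then show ?case by simp
next
  case (FConj \<phi>1 \<phi>2)
  then show ?case by (metis UnCI fv.simps(4) sat.simps(4))
qed auto

fun ren_t :: "(nat \<Rightarrow> nat) \<Rightarrow> ('f,'u) trm \<Rightarrow> ('f,'u) trm" where
  "ren_t R (Var i) = Var (R i)"
| "ren_t R (Par a) = Par a"
| "ren_t R (App f ts) = App f (map (ren_t R) ts)"

fun ren :: "(nat \<Rightarrow> nat) \<Rightarrow> ('f,'r,'u) fm \<Rightarrow> ('f,'r,'u) fm" where
  "ren R (FEq s t) = FEq (ren_t R s) (ren_t R t)"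
| "ren R (FRel P ts) = FRel P (map (ren_t R) ts)"
| "ren R (FNeg \<phi>) = FNeg (ren R \<phi>)"
| "ren R (FConj \<phi> \<psi>) = FConj (ren R \<phi>) (ren R \<psi>)"
| "ren R (FEx i \<phi>) = FEx (R i) (ren R \<phi>)"

lemma eval_ren_t: "eval_t S e (ren_t R t) = eval_t S (e \<circ> R) t"
proof (induction t)
  case (App f ts)
  have "map (eval_t S e \<circ> ren_t R) ts = map (eval_t S (e \<circ> R)) ts"
    by (rule map_cong[OF refl]) (use App in \<open>auto simp: comp_def\<close>)
  then show ?case by (simp only: eval_t.simps ren_t.simps map_map)
qed auto

lemma fv_ren_t: "fv_t (ren_t R t) = R ` fv_t t"
  by (induction t) auto

lemma par_ren_t: "par_t (ren_t R t) = par_t t"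
  by (induction t) auto

lemma sat_ren: "inj R \<Longrightarrow> sat S e (ren R \<phi>) = sat S (e \<circ> R) \<phi>"
proof (induction \<phi> arbitrary: e)
  case (FEx i \<phi>)
  have "\<And>a. (e(R i := a)) \<circ> R = (e \<circ> R)(i := a)"
    using FEx.prems by (auto simp: fun_eq_iff inj_eq)
  then show ?case using FEx by (simp add: inj_eq fun_upd_def comp_def)
qed (auto simp: eval_ren_t comp_def)

lemma fv_ren: "inj R \<Longrightarrow> fv (ren R \<phi>) = R ` fv \<phi>"
  by (induction \<phi>) (auto simp: fv_ren_t inj_eq)

lemma params_ren: "params (ren R \<phi>) = params \<phi>"
  by (induction \<phi>) (auto simp: par_ren_t)

fun exs :: "nat list \<Rightarrow> ('f,'r,'u) fm \<Rightarrow> ('f,'r,'u) fm" where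
  "exs [] \<phi> = \<phi>"
| "exs (i # js) \<phi> = FEx i (exs js \<phi>)"

lemma sat_exs: "sat S e (exs js \<phi>) \<longleftrightarrow> (\<exists>g. sat S (\<lambda>j. if j \<in> set js then g j else e j) \<phi>)"
proof (induction js arbitrary: e)
  case Nil then show ?case by simp
next
  case (Cons i js)
  show ?case
  proof
    assume "sat S e (exs (i # js) \<phi>)"
    then obtain a g where "sat S (\<lambda>j. if j \<in> set js then g j else (e(i:=a)) j) \<phi>"
      using Cons by auto
    then have "sat S (\<lambda>j. if j \<in> set (i#js) then (g(i:= if i \<in> set js then g i else a)) j else e j) \<phi>"
      by (rule back_subst[where P="\<lambda>e. sat S e \<phi>"]) (auto simp: fun_eq_iff)
    then show "\<exists>g. sat S (\<lambda>j. if j \<in> set (i#js) then g j else e j) \<phi>" by blast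
  next
    assume "\<exists>g. sat S (\<lambda>j. if j \<in> set (i#js) then g j else e j) \<phi>"
    then obtain g where g: "sat S (\<lambda>j. if j \<in> set (i#js) then g j else e j) \<phi>" by blast
    have "sat S (\<lambda>j. if j \<in> set js then g j else (e(i:=g i)) j) \<phi>"
      using g by (rule back_subst[where P="\<lambda>e. sat S e \<phi>"]) (auto simp: fun_eq_iff)
    then show "sat S e (exs (i # js) \<phi>)" using Cons by auto
  qed
qed

lemma fv_exs: "fv (exs js \<phi>) = fv \<phi> - set js"
  by (induction js) auto

lemma params_exs: "params (exs js \<phi>) = params \<phi>"
  by (induction js) auto

definition tt :: "('f,'r,'u) fm" where "tt = FEx 0 (FEq (Var 0) (Var 0))"

lemma sat_tt[simp]: "sat S e tt" and fv_tt[simp]: "fv tt = {}" and params_tt[simp]: "params tt = {}"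
  by (auto simp: tt_def)

fun eqs :: "nat \<Rightarrow> (nat \<times> nat) list \<Rightarrow> ('f,'r,'u) fm" where
  "eqs k [] = tt"
| "eqs k ((i,j) # E) = FConj (FEq (Var i) (Var (k + j))) (eqs k E)"

lemma sat_eqs: "sat S e (eqs k E) \<longleftrightarrow> (\<forall>(i,j)\<in>set E. e i = e (k + j))"
  by (induction E rule: eqs.induct) auto

lemma fv_eqs: "fv (eqs k E) \<subseteq> fst ` set E \<union> (\<lambda>(i,j). k + j) ` set E"
  by (induction E rule: eqs.induct) auto

lemma params_eqs[simp]: "params (eqs k E) = {}"
  by (induction E rule: eqs.induct) auto



lemma Defs_elem_len: "X \<in> Defs S n B \<Longrightarrow> v \<in> X \<Longrightarrow> length v = n"
  by (auto simp: Defs_def defset_def)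

lemma defG:
  assumes Y: "Y \<in> Defs S N B" and E: "\<forall>(i,j)\<in>set E. i < n \<and> j < N"
  shows "{v. length v = n \<and> (\<exists>u\<in>Y. \<forall>(i,j)\<in>set E. v!i = u!j)} \<in> Defs S n B"
proof -
  obtain \<psi> where Yd: "Y = defset S N \<psi>" and fm: "fm_in N B \<psi>"
    using Y by (auto simp: Defs_def)
  define fchi where "fchi = exs [n..<n+N] (FConj (eqs n E) (ren ((+) n) \<psi>))"
  have injn: "inj ((+) n :: nat \<Rightarrow> nat)" by (simp add: inj_on_def)
  have "fm_in n B fchi"
  proof -
    have "fst ` set E \<union> (\<lambda>(i,j). n + j) ` set E \<subseteq> {..<n+N}"
      using E by fastforce
    then have "fv (eqs n E) \<subseteq> {..<n+N}" using fv_eqs[of n E] by blast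
    then have "fv (FConj (eqs n E) (ren ((+) n) \<psi>)) \<subseteq> {..<n+N}"
      using fm by (auto simp: fm_in_def fv_ren[OF injn])
    then have "fv fchi \<subseteq> {..<n}" unfolding fchi_def fv_exs by auto
    moreover have "params fchi \<subseteq> B" using fm
      by (simp add: fchi_def params_exs params_ren fm_in_def)
    ultimately show ?thesis by (simp add: fm_in_def)
  qed
  moreover have "defset S n fchi = {v. length v = n \<and> (\<exists>u\<in>Y. \<forall>(i,j)\<in>set E. v!i = u!j)}"
  proof (intro set_eqI iffI)
    fix v assume "v \<in> defset S n fchi"
    then have len: "length v = n" and s: "sat S (\<lambda>i. v!i) fchi" by (auto simp: defset_def)
    then obtain g where g: "sat S (\<lambda>j. if j \<in> set [n..<n+N] then g j else v!j) (FConj (eqs n E) (ren ((+) n) \<psi>))"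
      unfolding fchi_def sat_exs by blast
    define e' where "e' = (\<lambda>j. if j \<in> set [n..<n+N] then g j else v!j)"
    define u where "u = map (\<lambda>j. g (n+j)) [0..<N]"
    have s1: "\<forall>(i,j)\<in>set E. e' i = e' (n + j)" using g by (simp add: e'_def sat_eqs)
    have s2: "sat S (e' \<circ> (+) n) \<psi>" using g by (simp add: e'_def sat_ren[OF injn])
    have "sat S (\<lambda>j. u!j) \<psi>"
      using s2 by (rule sat_cong[THEN iffD1, rotated]) (use fm in \<open>auto simp: fm_in_def u_def e'_def\<close>)
    then have "u \<in> Y" by (simp add: Yd defset_def u_def)
    moreover have "\<forall>(i,j)\<in>set E. v!i = u!j"
    proof (intro ballI, clarify)
      fix a b assume ab: "(a,b) \<in> set E"
      then have "a < n" "b < N" using E by auto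
      then show "v!a = u!b" using s1 ab by (auto simp: e'_def u_def)
    qed
    ultimately show "v \<in> {v. length v = n \<and> (\<exists>u\<in>Y. \<forall>(i,j)\<in>set E. v!i = u!j)}" using len by blast
  next
    fix v assume "v \<in> {v. length v = n \<and> (\<exists>u\<in>Y. \<forall>(i,j)\<in>set E. v!i = u!j)}"
    then obtain u where len: "length v = n" and u: "u \<in> Y" and uv: "\<forall>(i,j)\<in>set E. v!i = u!j" by blast
    have lu: "length u = N" using u Yd by (simp add: defset_def)
    have su: "sat S (\<lambda>j. u!j) \<psi>" using u Yd by (simp add: defset_def)
    define g where "g = (\<lambda>j. u ! (j - n))"
    define e' where "e' = (\<lambda>j. if j \<in> set [n..<n+N] then g j else v!j)"
    have "sat S (e' \<circ> (+) n) \<psi>"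
      using su by (rule sat_cong[THEN iffD1, rotated]) (use fm in \<open>auto simp: fm_in_def g_def e'_def\<close>)
    then have "sat S e' (ren ((+) n) \<psi>)" by (simp add: sat_ren[OF injn])
    moreover have "sat S e' (eqs n E)"
      unfolding sat_eqs
    proof (intro ballI, clarify)
      fix a b assume ab: "(a,b) \<in> set E"
      then have "a < n" "b < N" using E by auto
      then show "e' a = e' (n + b)" using uv ab by (auto simp: e'_def g_def)
    qed
    ultimately have "sat S (\<lambda>i. v!i) fchi" unfolding fchi_def sat_exs e'_def by auto
    then show "v \<in> defset S n fchi" using len by (simp add: defset_def)
  qed
  ultimately show ?thesis unfolding Defs_def by blast
qed



definition alg :: "'a set \<Rightarrow> 'a set set \<Rightarrow> bool" where
  "alg Sp A \<longleftrightarrow> Sp \<in> A \<and> (\<forall>X\<in>A. X \<subseteq> Sp) \<and> (\<forall>X\<in>A. Sp - X \<in> A) \<and> (\<forall>X\<in>A. \<forall>Y\<in>A. X \<inter> Y \<in> A)"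

definition fap :: "'a set \<Rightarrow> 'a set set \<Rightarrow> ('a set \<Rightarrow> real) \<Rightarrow> bool" where
  "fap Sp A \<mu> \<longleftrightarrow> \<mu> Sp = 1 \<and> (\<forall>X\<in>A. 0 \<le> \<mu> X) \<and>
     (\<forall>X\<in>A. \<forall>Y\<in>A. X \<inter> Y = {} \<longrightarrow> \<mu> (X \<union> Y) = \<mu> X + \<mu> Y)"

lemma alg_Sp: "alg Sp A \<Longrightarrow> Sp \<in> A" by (simp add: alg_def)
lemma alg_sub: "alg Sp A \<Longrightarrow> X \<in> A \<Longrightarrow> X \<subseteq> Sp" by (simp add: alg_def)
lemma alg_compl: "alg Sp A \<Longrightarrow> X \<in> A \<Longrightarrow> Sp - X \<in> A" by (simp add: alg_def)
lemma alg_Int: "alg Sp A \<Longrightarrow> X \<in> A \<Longrightarrow> Y \<in> A \<Longrightarrow> X \<inter> Y \<in> A" by (simp add: alg_def)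
lemma alg_empty: "alg Sp A \<Longrightarrow> {} \<in> A"
  using alg_compl[of Sp A Sp] alg_Sp by force
lemma alg_Un: assumes "alg Sp A" "X \<in> A" "Y \<in> A" shows "X \<union> Y \<in> A"
proof -
  have "X \<union> Y = Sp - ((Sp - X) \<inter> (Sp - Y))" using alg_sub[OF assms(1,2)] alg_sub[OF assms(1,3)] by blast
  then show ?thesis using assms by (simp add: alg_compl alg_Int)
qed
lemma alg_Diff: assumes "alg Sp A" "X \<in> A" "Y \<in> A" shows "X - Y \<in> A"
proof -
  have "X - Y = X \<inter> (Sp - Y)" using alg_sub[OF assms(1,2)] by blast
  then show ?thesis using assms by (simp add: alg_compl alg_Int)
qed

lemma alg_Inter: assumes "alg Sp A" "finite F" "F \<subseteq> A" shows "Sp \<inter> \<Inter>F \<in> A"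
  using assms(2,3)
proof (induction F rule: finite_induct)
  case empty then show ?case using assms(1) by (simp add: alg_Sp)
next
  case (insert a F)
  have "Sp \<inter> \<Inter>(insert a F) = a \<inter> (Sp \<inter> \<Inter>F)" by blast
  then show ?case using insert assms(1) by (simp add: alg_Int)
qed

lemma fap_nonneg: "fap Sp A \<mu> \<Longrightarrow> X \<in> A \<Longrightarrow> 0 \<le> \<mu> X" by (simp add: fap_def)
lemma fap_add: "fap Sp A \<mu> \<Longrightarrow> X \<in> A \<Longrightarrow> Y \<in> A \<Longrightarrow> X \<inter> Y = {} \<Longrightarrow> \<mu> (X \<union> Y) = \<mu> X + \<mu> Y"
  by (simp add: fap_def)
lemma fap_Sp: "fap Sp A \<mu> \<Longrightarrow> \<mu> Sp = 1" by (simp add: fap_def)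

lemma fap_empty: assumes "alg Sp A" "fap Sp A \<mu>" shows "\<mu> {} = 0"
  using fap_add[OF assms(2) alg_empty[OF assms(1)] alg_empty[OF assms(1)]] by simp

lemma fap_mono: assumes "alg Sp A" "fap Sp A \<mu>" "X \<in> A" "Y \<in> A" "X \<subseteq> Y" shows "\<mu> X \<le> \<mu> Y"
proof -
  have "Y = X \<union> (Y - X)" using assms by blast
  moreover have "Y - X \<in> A" using assms by (simp add: alg_Diff)
  ultimately have "\<mu> Y = \<mu> X + \<mu> (Y - X)" using fap_add[OF assms(2) assms(3), of "Y - X"] by force
  moreover have "0 \<le> \<mu> (Y - X)" using \<open>Y - X \<in> A\<close> assms(2) by (simp add: fap_nonneg)
  ultimately show ?thesis by simp
qed

lemma fap_diff: assumes "alg Sp A" "fap Sp A \<mu>" "X \<in> A" "Y \<in> A" "X \<subseteq> Y" shows "\<mu> (Y - X) = \<mu> Y - \<mu> X"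
proof -
  have "Y = X \<union> (Y - X)" using assms by blast
  moreover have "Y - X \<in> A" using assms by (simp add: alg_Diff)
  ultimately have "\<mu> Y = \<mu> X + \<mu> (Y - X)" using fap_add[OF assms(2) assms(3), of "Y - X"] by force
  then show ?thesis by simp
qed

definition dfam :: "('i \<Rightarrow> 'a set) \<Rightarrow> 'i set \<Rightarrow> bool" where
  "dfam g I \<longleftrightarrow> (\<forall>i\<in>I. \<forall>j\<in>I. i \<noteq> j \<longrightarrow> g i \<inter> g j = {})"

lemma fap_sum:
  assumes "alg Sp A" "fap Sp A \<mu>" "finite I" "\<forall>i\<in>I. g i \<in> A" "dfam g I"
  shows "(\<Union>i\<in>I. g i) \<in> A \<and> \<mu> (\<Union>i\<in>I. g i) = (\<Sum>i\<in>I. \<mu> (g i))"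
  using assms(3-5)
proof (induction I rule: finite_induct)
  case empty then show ?case using assms by (simp add: alg_empty fap_empty)
next
  case (insert i I)
  have d: "dfam g I" using insert.prems by (auto simp: dfam_def)
  have IH: "(\<Union>i\<in>I. g i) \<in> A \<and> \<mu> (\<Union>i\<in>I. g i) = (\<Sum>i\<in>I. \<mu> (g i))" using insert d by auto
  have gi: "g i \<in> A" using insert.prems by auto
  have disj: "g i \<inter> (\<Union>j\<in>I. g j) = {}"
    using insert.prems(2) insert.hyps(2) by (auto simp: dfam_def)
  have "(\<Union>j\<in>insert i I. g j) = g i \<union> (\<Union>j\<in>I. g j)" by simp
  then show ?case using IH gi disj insert.hyps assms(1,2)
    by (simp add: alg_Un fap_add)
qed

definition atom :: "'a set \<Rightarrow> 'a set set \<Rightarrow> 'a \<Rightarrow> 'a set" where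
  "atom Sp F x = {y \<in> Sp. \<forall>a\<in>F. y \<in> a \<longleftrightarrow> x \<in> a}"

definition atoms :: "'a set \<Rightarrow> 'a set set \<Rightarrow> 'a set set" where
  "atoms Sp F = atom Sp F ` Sp"

lemma atom_in: assumes "alg Sp A" "finite F" "F \<subseteq> A" shows "atom Sp F x \<in> A"
proof -
  have "atom Sp F x = Sp \<inter> \<Inter>((\<lambda>a. if x \<in> a then a else Sp - a) ` F)"
    unfolding atom_def by (auto split: if_splits)
  moreover have "(\<lambda>a. if x \<in> a then a else Sp - a) ` F \<subseteq> A"
    using assms by (auto simp: alg_compl)
  ultimately show ?thesis using alg_Inter[OF assms(1)] assms(2) by simp
qed

lemma atoms_in: "alg Sp A \<Longrightarrow> finite F \<Longrightarrow> F \<subseteq> A \<Longrightarrow> atoms Sp F \<subseteq> A"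
  by (auto simp: atoms_def atom_in)

lemma atoms_finite: assumes "finite F" shows "finite (atoms Sp F)"
proof -
  have "atoms Sp F \<subseteq> (\<lambda>T. {y\<in>Sp. \<forall>a\<in>F. y \<in> a \<longleftrightarrow> a \<in> T}) ` Pow F"
  proof
    fix \<alpha> assume "\<alpha> \<in> atoms Sp F"
    then obtain x where "\<alpha> = atom Sp F x" by (auto simp: atoms_def)
    then have "\<alpha> = (\<lambda>T. {y\<in>Sp. \<forall>a\<in>F. y \<in> a \<longleftrightarrow> a \<in> T}) {a\<in>F. x \<in> a}"
      by (auto simp: atom_def)
    then show "\<alpha> \<in> (\<lambda>T. {y\<in>Sp. \<forall>a\<in>F. y \<in> a \<longleftrightarrow> a \<in> T}) ` Pow F" by blast
  qed
  then show ?thesis using assms finite_subset by blast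
qed

lemma atoms_disj: assumes "\<alpha> \<in> atoms Sp F" "\<beta> \<in> atoms Sp F" "\<alpha> \<noteq> \<beta>" shows "\<alpha> \<inter> \<beta> = {}"
proof (rule ccontr)
  obtain x x' where x: "\<alpha> = atom Sp F x" and x': "\<beta> = atom Sp F x'" using assms by (auto simp: atoms_def)
  assume "\<alpha> \<inter> \<beta> \<noteq> {}"
  then obtain y where "y \<in> atom Sp F x" "y \<in> atom Sp F x'" using x x' by blast
  then have "\<forall>a\<in>F. x \<in> a \<longleftrightarrow> x' \<in> a" by (auto simp: atom_def)
  then have "atom Sp F x = atom Sp F x'" by (auto simp: atom_def)
  then show False using assms x x' by simp
qed

lemma atoms_disjoint_family: "dfam (\<lambda>\<alpha>. X \<inter> \<alpha>) (atoms Sp F)"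
  using atoms_disj unfolding dfam_def by blast

lemma atoms_Union: "\<Union>(atoms Sp F) = Sp"
  by (auto simp: atoms_def atom_def)

lemma atoms_sub: "\<alpha> \<in> atoms Sp F \<Longrightarrow> \<alpha> \<subseteq> Sp"
  by (auto simp: atoms_def atom_def)

lemma atoms_sub_or_disj: "a \<in> F \<Longrightarrow> \<alpha> \<in> atoms Sp F \<Longrightarrow> \<alpha> \<subseteq> a \<or> \<alpha> \<inter> a = {}"
  by (auto simp: atoms_def atom_def)

lemma fap_atoms_sum:
  assumes "alg Sp A" "fap Sp A \<mu>" "finite F" "F \<subseteq> A" "X \<in> A"
  shows "\<mu> X = (\<Sum>\<alpha>\<in>atoms Sp F. \<mu> (X \<inter> \<alpha>))"
proof -
  have "(\<Union>\<alpha>\<in>atoms Sp F. X \<inter> \<alpha>) = X \<inter> Sp" using atoms_Union[of Sp F] by blast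
  also have "\<dots> = X" using alg_sub[OF assms(1,5)] by blast
  finally have eq: "(\<Union>\<alpha>\<in>atoms Sp F. X \<inter> \<alpha>) = X" .
  have "\<forall>\<alpha>\<in>atoms Sp F. X \<inter> \<alpha> \<in> A" using atoms_in[OF assms(1,3,4)] assms(1,5) alg_Int by blast
  from fap_sum[OF assms(1,2) atoms_finite[OF assms(3)] this atoms_disjoint_family] eq
  show ?thesis by simp
qed


lemma finite_amalg:
  assumes A1: "alg (Sp :: 'a set) A1" and A2: "alg Sp A2" and A0: "alg Sp A0" and s01: "A0 \<subseteq> A1" and s02: "A0 \<subseteq> A2"
    and M1: "fap Sp A1 \<mu>1" and M2: "fap Sp A2 \<mu>2" and agree: "\<forall>c\<in>A0. \<mu>1 c = \<mu>2 c"
    and sep: "\<forall>a\<in>A1. \<forall>b\<in>A2. a \<inter> b = {} \<longrightarrow> (\<exists>c\<in>A0. a \<subseteq> c \<and> c \<inter> b = {})"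
    and F1: "finite F1" "F1 \<subseteq> A1" and F2: "finite F2" "F2 \<subseteq> A2"
  shows "\<exists>P (w :: 'a set \<times> 'a set \<Rightarrow> real) pt. finite P \<and> (\<forall>p\<in>P. 0 \<le> w p \<and> pt p \<in> Sp) \<and> (\<Sum>p\<in>P. w p) = 1 \<and>
     (\<forall>a\<in>F1. (\<Sum>p\<in>P. if pt p \<in> a then w p else 0) = \<mu>1 a) \<and>
     (\<forall>a\<in>F2. (\<Sum>p\<in>P. if pt p \<in> a then w p else 0) = \<mu>2 a)"
proof -
  define At1 where "At1 = atoms Sp F1"
  define At2 where "At2 = atoms Sp F2"
  have At1A: "At1 \<subseteq> A1" and finAt1: "finite At1" using atoms_in[OF A1 F1] atoms_finite[OF F1(1)] by (auto simp: At1_def)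
  have At2A: "At2 \<subseteq> A2" and finAt2: "finite At2" using atoms_in[OF A2 F2] atoms_finite[OF F2(1)] by (auto simp: At2_def)
  define d where "d = (\<lambda>\<alpha> \<beta>. SOME c. c \<in> A0 \<and> \<alpha> \<subseteq> c \<and> c \<inter> \<beta> = {})"
  have dprop: "d \<alpha> \<beta> \<in> A0 \<and> \<alpha> \<subseteq> d \<alpha> \<beta> \<and> d \<alpha> \<beta> \<inter> \<beta> = {}"
    if "\<alpha> \<in> At1" "\<beta> \<in> At2" "\<alpha> \<inter> \<beta> = {}" for \<alpha> \<beta>
  proof -
    have ab: "\<alpha> \<in> A1" "\<beta> \<in> A2" using that At1A At2A by auto
    have "\<exists>c. c \<in> A0 \<and> \<alpha> \<subseteq> c \<and> c \<inter> \<beta> = {}" using sep[rule_format, OF ab that(3)] by blast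
    then show ?thesis unfolding d_def by (rule someI_ex)
  qed
  define F0 where "F0 = (\<lambda>(\<alpha>,\<beta>). d \<alpha> \<beta>) ` {(\<alpha>,\<beta>). \<alpha> \<in> At1 \<and> \<beta> \<in> At2 \<and> \<alpha> \<inter> \<beta> = {}}"
  have finF0: "finite F0"
  proof -
    have "{(\<alpha>,\<beta>). \<alpha> \<in> At1 \<and> \<beta> \<in> At2 \<and> \<alpha> \<inter> \<beta> = {}} \<subseteq> At1 \<times> At2" by auto
    then show ?thesis unfolding F0_def by (rule finite_imageI[OF finite_subset]) (use finAt1 finAt2 in simp)
  qed
  have F0A: "F0 \<subseteq> A0" unfolding F0_def using dprop by auto
  define At0 where "At0 = atoms Sp F0"
  have At0A: "At0 \<subseteq> A0" and finAt0: "finite At0" using atoms_in[OF A0 finF0 F0A] atoms_finite[OF finF0] by (auto simp: At0_def)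
  have F0A1: "F0 \<subseteq> A1" and F0A2: "F0 \<subseteq> A2" using F0A s01 s02 by auto
  define W where "W = (\<lambda>\<alpha> \<beta>. \<Sum>\<gamma>\<in>At0. if \<mu>1 \<gamma> = 0 then 0 else \<mu>1 (\<alpha> \<inter> \<gamma>) * \<mu>2 (\<beta> \<inter> \<gamma>) / \<mu>1 \<gamma>)"
  have W0: "0 \<le> W \<alpha> \<beta>" if "\<alpha> \<in> At1" "\<beta> \<in> At2" for \<alpha> \<beta>
    unfolding W_def
  proof (rule sum_nonneg)
    fix \<gamma> assume g: "\<gamma> \<in> At0"
    then have "\<gamma> \<in> A1" "\<gamma> \<in> A2" using At0A s01 s02 by auto
    then have "0 \<le> \<mu>1 (\<alpha> \<inter> \<gamma>)" "0 \<le> \<mu>2 (\<beta> \<inter> \<gamma>)" "0 \<le> \<mu>1 \<gamma>"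
      using that At1A At2A A1 A2 M1 M2 by (auto intro!: fap_nonneg alg_Int)
    then show "0 \<le> (if \<mu>1 \<gamma> = 0 then 0 else \<mu>1 (\<alpha> \<inter> \<gamma>) * \<mu>2 (\<beta> \<inter> \<gamma>) / \<mu>1 \<gamma>)" by simp
  qed
  have Wsep: "W \<alpha> \<beta> = 0" if "\<alpha> \<in> At1" "\<beta> \<in> At2" "\<alpha> \<inter> \<beta> = {}" for \<alpha> \<beta>
    unfolding W_def
  proof (rule sum.neutral, rule ballI)
    fix \<gamma> assume g: "\<gamma> \<in> At0"
    have dF0: "d \<alpha> \<beta> \<in> F0" unfolding F0_def using that by force
    have dp: "\<alpha> \<subseteq> d \<alpha> \<beta>" "d \<alpha> \<beta> \<inter> \<beta> = {}" using dprop that by auto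
    from atoms_sub_or_disj[OF dF0, of \<gamma> Sp] g have "\<gamma> \<subseteq> d \<alpha> \<beta> \<or> \<gamma> \<inter> d \<alpha> \<beta> = {}" by (simp add: At0_def)
    then have "\<beta> \<inter> \<gamma> = {} \<or> \<alpha> \<inter> \<gamma> = {}" using dp by blast
    then show "(if \<mu>1 \<gamma> = 0 then 0 else \<mu>1 (\<alpha> \<inter> \<gamma>) * \<mu>2 (\<beta> \<inter> \<gamma>) / \<mu>1 \<gamma>) = 0"
      using fap_empty[OF A1 M1] fap_empty[OF A2 M2] by auto
  qed
  have Wrow: "(\<Sum>\<beta>\<in>At2. W \<alpha> \<beta>) = \<mu>1 \<alpha>" if a: "\<alpha> \<in> At1" for \<alpha>
  proof -
    have aA: "\<alpha> \<in> A1" using a At1A by auto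
    have "(\<Sum>\<beta>\<in>At2. W \<alpha> \<beta>) = (\<Sum>\<gamma>\<in>At0. \<Sum>\<beta>\<in>At2. if \<mu>1 \<gamma> = 0 then 0 else \<mu>1 (\<alpha> \<inter> \<gamma>) * \<mu>2 (\<beta> \<inter> \<gamma>) / \<mu>1 \<gamma>)"
      unfolding W_def by (rule sum.swap)
    also have "\<dots> = (\<Sum>\<gamma>\<in>At0. \<mu>1 (\<alpha> \<inter> \<gamma>))"
    proof (rule sum.cong[OF refl])
      fix \<gamma> assume g: "\<gamma> \<in> At0"
      then have gA: "\<gamma> \<in> A1" "\<gamma> \<in> A2" "\<gamma> \<in> A0" using At0A s01 s02 by auto
      show "(\<Sum>\<beta>\<in>At2. if \<mu>1 \<gamma> = 0 then 0 else \<mu>1 (\<alpha> \<inter> \<gamma>) * \<mu>2 (\<beta> \<inter> \<gamma>) / \<mu>1 \<gamma>) = \<mu>1 (\<alpha> \<inter> \<gamma>)"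
      proof (cases "\<mu>1 \<gamma> = 0")
        case True
        have "\<mu>1 (\<alpha> \<inter> \<gamma>) \<le> \<mu>1 \<gamma>" using fap_mono[OF A1 M1] gA aA A1 by (simp add: alg_Int)
        moreover have "0 \<le> \<mu>1 (\<alpha> \<inter> \<gamma>)" using fap_nonneg[OF M1] gA aA A1 by (simp add: alg_Int)
        ultimately show ?thesis using True by simp
      next
        case False
        have "(\<Sum>\<beta>\<in>At2. \<mu>2 (\<beta> \<inter> \<gamma>)) = \<mu>2 \<gamma>"
          using fap_atoms_sum[OF A2 M2 F2 gA(2)] by (simp add: At2_def Int_commute)
        also have "\<dots> = \<mu>1 \<gamma>" using agree gA by simp
        finally have "(\<Sum>\<beta>\<in>At2. \<mu>2 (\<beta> \<inter> \<gamma>)) = \<mu>1 \<gamma>" .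
        then have "(\<Sum>\<beta>\<in>At2. \<mu>1 (\<alpha> \<inter> \<gamma>) * \<mu>2 (\<beta> \<inter> \<gamma>) / \<mu>1 \<gamma>) = \<mu>1 (\<alpha> \<inter> \<gamma>) * \<mu>1 \<gamma> / \<mu>1 \<gamma>"
          by (simp add: sum_distrib_left[symmetric] sum_divide_distrib[symmetric])
        then show ?thesis using False by simp
      qed
    qed
    also have "\<dots> = \<mu>1 \<alpha>"
      using fap_atoms_sum[OF A1 M1 finF0 F0A1 aA] by (simp add: At0_def)
    finally show ?thesis .
  qed
  have Wcol: "(\<Sum>\<alpha>\<in>At1. W \<alpha> \<beta>) = \<mu>2 \<beta>" if b: "\<beta> \<in> At2" for \<beta>
  proof -
    have bA: "\<beta> \<in> A2" using b At2A by auto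
    have "(\<Sum>\<alpha>\<in>At1. W \<alpha> \<beta>) = (\<Sum>\<gamma>\<in>At0. \<Sum>\<alpha>\<in>At1. if \<mu>1 \<gamma> = 0 then 0 else \<mu>1 (\<alpha> \<inter> \<gamma>) * \<mu>2 (\<beta> \<inter> \<gamma>) / \<mu>1 \<gamma>)"
      unfolding W_def by (rule sum.swap)
    also have "\<dots> = (\<Sum>\<gamma>\<in>At0. \<mu>2 (\<beta> \<inter> \<gamma>))"
    proof (rule sum.cong[OF refl])
      fix \<gamma> assume g: "\<gamma> \<in> At0"
      then have gA: "\<gamma> \<in> A1" "\<gamma> \<in> A2" "\<gamma> \<in> A0" using At0A s01 s02 by auto
      show "(\<Sum>\<alpha>\<in>At1. if \<mu>1 \<gamma> = 0 then 0 else \<mu>1 (\<alpha> \<inter> \<gamma>) * \<mu>2 (\<beta> \<inter> \<gamma>) / \<mu>1 \<gamma>) = \<mu>2 (\<beta> \<inter> \<gamma>)"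
      proof (cases "\<mu>1 \<gamma> = 0")
        case True
        then have "\<mu>2 \<gamma> = 0" using agree gA by simp
        moreover have "\<mu>2 (\<beta> \<inter> \<gamma>) \<le> \<mu>2 \<gamma>" using fap_mono[OF A2 M2] gA bA A2 by (simp add: alg_Int)
        moreover have "0 \<le> \<mu>2 (\<beta> \<inter> \<gamma>)" using fap_nonneg[OF M2] gA bA A2 by (simp add: alg_Int)
        ultimately show ?thesis using True by simp
      next
        case False
        have "(\<Sum>\<alpha>\<in>At1. \<mu>1 (\<alpha> \<inter> \<gamma>)) = \<mu>1 \<gamma>"
          using fap_atoms_sum[OF A1 M1 F1 gA(1)] by (simp add: At1_def Int_commute)
        then have "(\<Sum>\<alpha>\<in>At1. \<mu>1 (\<alpha> \<inter> \<gamma>) * \<mu>2 (\<beta> \<inter> \<gamma>) / \<mu>1 \<gamma>) = \<mu>1 \<gamma> * \<mu>2 (\<beta> \<inter> \<gamma>) / \<mu>1 \<gamma>"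
          by (simp add: sum_distrib_right[symmetric] sum_divide_distrib[symmetric])
        then show ?thesis using False by simp
      qed
    qed
    also have "\<dots> = \<mu>2 \<beta>"
      using fap_atoms_sum[OF A2 M2 finF0 F0A2 bA] by (simp add: At0_def)
    finally show ?thesis .
  qed
  define P where "P = {p \<in> At1 \<times> At2. fst p \<inter> snd p \<noteq> {}}"
  define w where "w = (\<lambda>p. W (fst p) (snd p))"
  define pt where "pt = (\<lambda>p. SOME x. x \<in> fst p \<inter> snd p \<inter> Sp)"
  have finP: "finite P" unfolding P_def using finAt1 finAt2 by simp
  have ptin0: "pt p \<in> fst p \<inter> snd p \<inter> Sp" if "p \<in> P" for p
  proof -
    have "fst p \<subseteq> Sp" using that atoms_sub[of "fst p" Sp F1] by (auto simp: P_def At1_def)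
    then have "\<exists>x. x \<in> fst p \<inter> snd p \<inter> Sp" using that by (auto simp: P_def)
    then show ?thesis unfolding pt_def by (rule someI_ex)
  qed
  have ptin: "pt p \<in> fst p \<inter> snd p" if "p \<in> P" for p using ptin0[OF that] by blast
  have ptSp: "pt p \<in> Sp" if "p \<in> P" for p using ptin0[OF that] by blast
  have red1: "(\<Sum>p\<in>P. if pt p \<in> a then w p else 0) = (\<Sum>p\<in>At1 \<times> At2. if fst p \<subseteq> a then w p else 0)"
    if ha: "\<forall>\<alpha>\<in>At1. \<alpha> \<subseteq> a \<or> \<alpha> \<inter> a = {}" for a
  proof (rule sum.mono_neutral_cong_left)
    show "finite (At1 \<times> At2)" using finAt1 finAt2 by simp
    show "P \<subseteq> At1 \<times> At2" by (auto simp: P_def)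
    show "\<forall>i\<in>At1 \<times> At2 - P. (if fst i \<subseteq> a then w i else 0) = 0"
      using Wsep by (auto simp: P_def w_def)
    show "(if pt x \<in> a then w x else 0) = (if fst x \<subseteq> a then w x else 0)" if "x \<in> P" for x
    proof -
      have "fst x \<in> At1" using that by (auto simp: P_def)
      then have "pt x \<in> a \<longleftrightarrow> fst x \<subseteq> a" using ha ptin[OF that] by blast
      then show ?thesis by simp
    qed
  qed
  have red2: "(\<Sum>p\<in>P. if pt p \<in> a then w p else 0) = (\<Sum>p\<in>At1 \<times> At2. if snd p \<subseteq> a then w p else 0)"
    if ha: "\<forall>\<beta>\<in>At2. \<beta> \<subseteq> a \<or> \<beta> \<inter> a = {}" for a
  proof (rule sum.mono_neutral_cong_left)
    show "finite (At1 \<times> At2)" using finAt1 finAt2 by simp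
    show "P \<subseteq> At1 \<times> At2" by (auto simp: P_def)
    show "\<forall>i\<in>At1 \<times> At2 - P. (if snd i \<subseteq> a then w i else 0) = 0"
      using Wsep by (auto simp: P_def w_def)
    show "(if pt x \<in> a then w x else 0) = (if snd x \<subseteq> a then w x else 0)" if "x \<in> P" for x
    proof -
      have "snd x \<in> At2" using that by (auto simp: P_def)
      then have "pt x \<in> a \<longleftrightarrow> snd x \<subseteq> a" using ha ptin[OF that] by blast
      then show ?thesis by simp
    qed
  qed
  have marg1: "(\<Sum>p\<in>At1 \<times> At2. if fst p \<subseteq> a then w p else 0) = (\<Sum>\<alpha>\<in>At1. if \<alpha> \<subseteq> a then \<mu>1 \<alpha> else 0)" for a
  proof -
    have "(\<Sum>p\<in>At1 \<times> At2. if fst p \<subseteq> a then w p else 0) = (\<Sum>\<alpha>\<in>At1. \<Sum>\<beta>\<in>At2. if \<alpha> \<subseteq> a then W \<alpha> \<beta> else 0)"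
      unfolding w_def sum.cartesian_product by (rule sum.cong[OF refl]) (simp add: case_prod_beta)
    also have "\<dots> = (\<Sum>\<alpha>\<in>At1. if \<alpha> \<subseteq> a then \<mu>1 \<alpha> else 0)"
      by (rule sum.cong[OF refl]) (simp add: Wrow)
    finally show ?thesis .
  qed
  have marg2: "(\<Sum>p\<in>At1 \<times> At2. if snd p \<subseteq> a then w p else 0) = (\<Sum>\<beta>\<in>At2. if \<beta> \<subseteq> a then \<mu>2 \<beta> else 0)" for a
  proof -
    have "(\<Sum>p\<in>At1 \<times> At2. if snd p \<subseteq> a then w p else 0) = (\<Sum>\<alpha>\<in>At1. \<Sum>\<beta>\<in>At2. if \<beta> \<subseteq> a then W \<alpha> \<beta> else 0)"
      unfolding w_def sum.cartesian_product by (rule sum.cong[OF refl]) (simp add: case_prod_beta)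
    also have "\<dots> = (\<Sum>\<beta>\<in>At2. \<Sum>\<alpha>\<in>At1. if \<beta> \<subseteq> a then W \<alpha> \<beta> else 0)"
      by (rule sum.swap)
    also have "\<dots> = (\<Sum>\<beta>\<in>At2. if \<beta> \<subseteq> a then \<mu>2 \<beta> else 0)"
      by (rule sum.cong[OF refl]) (simp add: Wcol)
    finally show ?thesis .
  qed
  have ev1: "(\<Sum>\<alpha>\<in>At1. if \<alpha> \<subseteq> a then \<mu>1 \<alpha> else 0) = \<mu>1 a"
    if "a \<in> A1" "\<forall>\<alpha>\<in>At1. \<alpha> \<subseteq> a \<or> \<alpha> \<inter> a = {}" for a
  proof -
    have "\<mu>1 a = (\<Sum>\<alpha>\<in>At1. \<mu>1 (a \<inter> \<alpha>))"
      using fap_atoms_sum[OF A1 M1 F1 that(1)] by (simp add: At1_def)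
    also have "\<dots> = (\<Sum>\<alpha>\<in>At1. if \<alpha> \<subseteq> a then \<mu>1 \<alpha> else 0)"
    proof (rule sum.cong[OF refl])
      fix \<alpha> assume "\<alpha> \<in> At1"
      then have "\<alpha> \<subseteq> a \<or> \<alpha> \<inter> a = {}" using that by blast
      then have "a \<inter> \<alpha> = (if \<alpha> \<subseteq> a then \<alpha> else {})" by auto
      then show "\<mu>1 (a \<inter> \<alpha>) = (if \<alpha> \<subseteq> a then \<mu>1 \<alpha> else 0)"
        using fap_empty[OF A1 M1] by simp
    qed
    finally show ?thesis by simp
  qed
  have ev2: "(\<Sum>\<beta>\<in>At2. if \<beta> \<subseteq> a then \<mu>2 \<beta> else 0) = \<mu>2 a"
    if "a \<in> A2" "\<forall>\<beta>\<in>At2. \<beta> \<subseteq> a \<or> \<beta> \<inter> a = {}" for a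
  proof -
    have "\<mu>2 a = (\<Sum>\<beta>\<in>At2. \<mu>2 (a \<inter> \<beta>))"
      using fap_atoms_sum[OF A2 M2 F2 that(1)] by (simp add: At2_def)
    also have "\<dots> = (\<Sum>\<beta>\<in>At2. if \<beta> \<subseteq> a then \<mu>2 \<beta> else 0)"
    proof (rule sum.cong[OF refl])
      fix \<beta> assume "\<beta> \<in> At2"
      then have "\<beta> \<subseteq> a \<or> \<beta> \<inter> a = {}" using that by blast
      then have "a \<inter> \<beta> = (if \<beta> \<subseteq> a then \<beta> else {})" by auto
      then show "\<mu>2 (a \<inter> \<beta>) = (if \<beta> \<subseteq> a then \<mu>2 \<beta> else 0)"
        using fap_empty[OF A2 M2] by simp
    qed
    finally show ?thesis by simp
  qed
  have SpAt1: "\<forall>\<alpha>\<in>At1. \<alpha> \<subseteq> Sp \<or> \<alpha> \<inter> Sp = {}" using atoms_sub by (auto simp: At1_def)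
  have "(\<Sum>p\<in>P. w p) = (\<Sum>p\<in>P. if pt p \<in> Sp then w p else 0)"
    using ptSp by (intro sum.cong) auto
  also have "\<dots> = 1"
    using red1[OF SpAt1] marg1[of Sp] ev1[OF alg_Sp[OF A1] SpAt1] fap_Sp[OF M1] by simp
  finally have tot: "(\<Sum>p\<in>P. w p) = 1" .
  have m1: "\<forall>a\<in>F1. (\<Sum>p\<in>P. if pt p \<in> a then w p else 0) = \<mu>1 a"
  proof
    fix a assume a: "a \<in> F1"
    then have h: "\<forall>\<alpha>\<in>At1. \<alpha> \<subseteq> a \<or> \<alpha> \<inter> a = {}" using atoms_sub_or_disj[of a F1 _ Sp] by (simp add: At1_def)
    show "(\<Sum>p\<in>P. if pt p \<in> a then w p else 0) = \<mu>1 a"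
    proof -
      have "a \<in> A1" using a F1 by auto
      then show ?thesis using red1[OF h] marg1[of a] ev1[OF _ h] by presburger
    qed
  qed
  have m2: "\<forall>a\<in>F2. (\<Sum>p\<in>P. if pt p \<in> a then w p else 0) = \<mu>2 a"
  proof
    fix a assume a: "a \<in> F2"
    then have h: "\<forall>\<beta>\<in>At2. \<beta> \<subseteq> a \<or> \<beta> \<inter> a = {}" using atoms_sub_or_disj[of a F2 _ Sp] by (simp add: At2_def)
    show "(\<Sum>p\<in>P. if pt p \<in> a then w p else 0) = \<mu>2 a"
    proof -
      have "a \<in> A2" using a F2 by auto
      then show ?thesis using red2[OF h] marg2[of a] ev2[OF _ h] by presburger
    qed
  qed
  have "\<forall>p\<in>P. 0 \<le> w p \<and> pt p \<in> Sp" using W0 ptSp by (auto simp: P_def w_def)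
  then show ?thesis using finP tot m1 m2 by (intro exI[of _ P] exI[of _ w] exI[of _ pt]) simp
qed



lemma amalg:
  assumes B: "alg (Sp :: 'a set) B" and A: "alg Sp A1" "alg Sp A2" "alg Sp A0" "A1 \<subseteq> B" "A2 \<subseteq> B" "A0 \<subseteq> A1" "A0 \<subseteq> A2"
    and M: "fap Sp A1 \<mu>1" "fap Sp A2 \<mu>2" "\<forall>c\<in>A0. \<mu>1 c = \<mu>2 c"
    and sep: "\<forall>a\<in>A1. \<forall>b\<in>A2. a \<inter> b = {} \<longrightarrow> (\<exists>c\<in>A0. a \<subseteq> c \<and> c \<inter> b = {})"
  shows "\<exists>m. fap Sp B m \<and> (\<forall>a\<in>A1. m a = \<mu>1 a) \<and> (\<forall>a\<in>A2. m a = \<mu>2 a)"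
proof -
  define K :: "('a set \<Rightarrow> real) set" where "K = PiE UNIV (\<lambda>_. {0..1})"
  have "compactin (product_topology (\<lambda>_. euclidean) UNIV) K"
    unfolding K_def by (subst compactin_PiE) auto
  then have cK: "compact K"
    by (simp add: euclidean_product_topology)
  define I :: "(nat \<times> 'a set \<times> 'a set) set" where
    "I = {(0,X,Y) | X Y. X \<in> B \<and> Y \<in> B \<and> X \<inter> Y = {}} \<union> {(1,a,a) | a. a \<in> A1}
       \<union> {(2,a,a) | a. a \<in> A2} \<union> {(3,Sp,Sp)}"
  define f :: "nat \<times> 'a set \<times> 'a set \<Rightarrow> ('a set \<Rightarrow> real) set" where
    "f = (\<lambda>(k,X,Y). if k = 0 then {m. m (X \<union> Y) = m X + m Y}
        else if k = 1 then {m. m X = \<mu>1 X} else if k = 2 then {m. m X = \<mu>2 X} else {m. m Sp = 1})"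
  have cont: "continuous_on UNIV (\<lambda>m::'a set \<Rightarrow> real. m X)" for X
    by simp
  have clo: "closed (f i)" for i
  proof -
    obtain k X Y where i: "i = (k,X,Y)" by (cases i) auto
    show ?thesis unfolding i f_def
      by (auto intro!: closed_Collect_eq cont continuous_intros)
  qed
  have fip: "K \<inter> (\<Inter>i\<in>I'. f i) \<noteq> {}" if I': "finite I'" "I' \<subseteq> I" for I'
  proof -
    define F1 where "F1 = {X. (1,X,X) \<in> I'}"
    define F2 where "F2 = {X. (2,X,X) \<in> I'}"
    have f1: "F1 \<subseteq> (\<lambda>i. fst (snd i)) ` I'"
      unfolding F1_def by (rule subsetI, rule image_eqI[where x="(1, _, _)"]) auto
    have f2: "F2 \<subseteq> (\<lambda>i. fst (snd i)) ` I'"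
      unfolding F2_def by (rule subsetI, rule image_eqI[where x="(2, _, _)"]) auto
    have fin: "finite F1" "finite F2" using I' f1 f2 finite_subset finite_imageI by blast+
    have sub: "F1 \<subseteq> A1" "F2 \<subseteq> A2" using I' by (auto simp: F1_def F2_def I_def)
    obtain P and w :: "'a set \<times> 'a set \<Rightarrow> real" and pt where P: "finite P" "\<forall>p\<in>P. 0 \<le> w p \<and> pt p \<in> Sp"
      "(\<Sum>p\<in>P. w p) = 1"
      "\<forall>a\<in>F1. (\<Sum>p\<in>P. if pt p \<in> a then w p else 0) = \<mu>1 a"
      "\<forall>a\<in>F2. (\<Sum>p\<in>P. if pt p \<in> a then w p else 0) = \<mu>2 a"
      using finite_amalg[OF A(1,2,3,6,7) M sep fin(1) sub(1) fin(2) sub(2)] by blast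
    define m where "m = (\<lambda>X. \<Sum>p\<in>P. if pt p \<in> X then w p else 0)"
    have m01: "m X \<in> {0..1}" for X
    proof -
      have "0 \<le> m X" unfolding m_def using P by (auto intro: sum_nonneg)
      moreover have "m X \<le> (\<Sum>p\<in>P. w p)" unfolding m_def by (rule sum_mono) (use P in auto)
      ultimately show ?thesis using P(3) by auto
    qed
    then have "m \<in> K" by (simp add: K_def PiE_iff)
    moreover have "m \<in> f i" if "i \<in> I'" for i
    proof -
      have "i \<in> I" using that I' by auto
      then consider (a) X Y where "i = (0,X,Y)" "X \<inter> Y = {}" | (b) a where "i = (1,a,a)" |
         (c) a where "i = (2,a,a)" | (d) "i = (3,Sp,Sp)"
        unfolding I_def by blast
      then show ?thesis
      proof cases
        case a
        have "m (X \<union> Y) = m X + m Y"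
          unfolding m_def sum.distrib[symmetric] using a by (intro sum.cong) auto
        then show ?thesis using a by (simp add: f_def)
      next
        case b
        then have "a \<in> F1" using that by (simp add: F1_def)
        then show ?thesis using b P by (simp add: f_def m_def)
      next
        case c
        then have "a \<in> F2" using that by (simp add: F2_def)
        then show ?thesis using c P by (simp add: f_def m_def)
      next
        case d
        then show ?thesis using P by (simp add: f_def m_def)
      qed
    qed
    ultimately show ?thesis by blast
  qed
  have "K \<inter> (\<Inter>i\<in>I. f i) \<noteq> {}"
    by (rule compact_imp_fip_image[OF cK clo fip])
  then obtain m where m: "m \<in> K" "\<forall>i\<in>I. m \<in> f i" by blast
  have "fap Sp B m"
    unfolding fap_def
  proof (intro conjI ballI impI)
    have "(3,Sp,Sp) \<in> I" unfolding I_def by blast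
    from m(2)[rule_format, OF this] show "m Sp = 1" by (simp add: f_def)
    show "0 \<le> m X" for X using m(1) by (auto simp: K_def PiE_iff)
    show "m (X \<union> Y) = m X + m Y" if "X \<in> B" "Y \<in> B" "X \<inter> Y = {}" for X Y
    proof -
      have "(0,X,Y) \<in> I" unfolding I_def using that by blast
      from m(2)[rule_format, OF this] show ?thesis by (simp add: f_def)
    qed
  qed
  moreover have "\<forall>a\<in>A1. m a = \<mu>1 a"
  proof
    fix a assume "a \<in> A1"
    then have "(1,a,a) \<in> I" unfolding I_def by blast
    from m(2)[rule_format, OF this] show "m a = \<mu>1 a" by (simp add: f_def)
  qed
  moreover have "\<forall>a\<in>A2. m a = \<mu>2 a"
  proof
    fix a assume "a \<in> A2"
    then have "(2,a,a) \<in> I" unfolding I_def by blast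
    from m(2)[rule_format, OF this] show "m a = \<mu>2 a" by (simp add: f_def)
  qed
  ultimately show ?thesis by blast
qed



lemma Defs_mono: "B \<subseteq> B' \<Longrightarrow> Defs S n B \<subseteq> Defs S n B'"
  by (auto simp: Defs_def fm_in_def)

lemma Sp_Defs: "{v. length v = n} \<in> Defs S n B"
proof -
  have "defset S n tt = {v. length v = n}" by (simp add: defset_def)
  moreover have "fm_in n B tt" by (simp add: fm_in_def)
  ultimately show ?thesis unfolding Defs_def by blast
qed

lemma Defs_Int: assumes "X \<in> Defs S n B" "Y \<in> Defs S n B" shows "X \<inter> Y \<in> Defs S n B"
proof -
  obtain \<phi> \<psi> where "X = defset S n \<phi>" "fm_in n B \<phi>" "Y = defset S n \<psi>" "fm_in n B \<psi>"
    using assms by (auto simp: Defs_def)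
  then have "X \<inter> Y = defset S n (FConj \<phi> \<psi>)" "fm_in n B (FConj \<phi> \<psi>)"
    by (auto simp: defset_def fm_in_def)
  then show ?thesis unfolding Defs_def by blast
qed

lemma Defs_compl: assumes "X \<in> Defs S n B" shows "{v. length v = n} - X \<in> Defs S n B"
proof -
  obtain \<phi> where "X = defset S n \<phi>" "fm_in n B \<phi>"
    using assms by (auto simp: Defs_def)
  then have "{v. length v = n} - X = defset S n (FNeg \<phi>)" "fm_in n B (FNeg \<phi>)"
    by (auto simp: defset_def fm_in_def)
  then show ?thesis unfolding Defs_def by blast
qed

lemma Defs_sub: "X \<in> Defs S n B \<Longrightarrow> X \<subseteq> {v. length v = n}"
  by (auto simp: Defs_def defset_def)

lemma alg_Defs: "alg {v. length v = n} (Defs S n B)"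
  unfolding alg_def using Sp_Defs Defs_Int Defs_compl Defs_sub by blast

lemma keisler_fap: "keisler S n B \<mu> \<Longrightarrow> fap {v. length v = n} (Defs S n B) \<mu>"
  by (simp add: keisler_def fap_def)

lemma keisler_zero: "keisler S n B \<mu> \<Longrightarrow> X \<notin> Defs S n B \<Longrightarrow> \<mu> X = 0"
  by (simp add: keisler_def)

lemma keisler_iff: "keisler S n B \<mu> \<longleftrightarrow> fap {v. length v = n} (Defs S n B) \<mu> \<and> (\<forall>X. X \<notin> Defs S n B \<longrightarrow> \<mu> X = 0)"
  by (auto simp: keisler_def fap_def)

definition proj :: "(nat \<Rightarrow> nat) \<Rightarrow> nat \<Rightarrow> 'a list \<Rightarrow> 'a list" where
  "proj r n u = map (\<lambda>i. u ! r i) [0..<n]"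

definition cyl :: "(nat \<Rightarrow> nat) \<Rightarrow> nat \<Rightarrow> nat \<Rightarrow> 'a list set \<Rightarrow> 'a list set" where
  "cyl r n N X = {u. length u = N \<and> proj r n u \<in> X}"

lemma length_proj[simp]: "length (proj r n u) = n" by (simp add: proj_def)
lemma nth_proj[simp]: "i < n \<Longrightarrow> proj r n u ! i = u ! r i" by (simp add: proj_def)

lemma cyl_Defs:
  assumes "X \<in> Defs S n B" "\<forall>i<n. r i < N"
  shows "cyl r n N X \<in> Defs S N B"
proof -
  let ?E = "map (\<lambda>i. (r i, i)) [0..<n]"
  have E: "\<forall>(i,j)\<in>set ?E. i < N \<and> j < n" using assms(2) by auto
  have "{u. length u = N \<and> (\<exists>v\<in>X. \<forall>(i,j)\<in>set ?E. u!i = v!j)} = cyl r n N X"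
  proof (intro set_eqI iffI)
    fix u assume "u \<in> {u. length u = N \<and> (\<exists>v\<in>X. \<forall>(i,j)\<in>set ?E. u!i = v!j)}"
    then obtain v where u: "length u = N" "v \<in> X" "\<forall>j<n. u ! r j = v ! j" by auto
    have "length v = n" using u(2) assms(1) Defs_sub by blast
    then have "proj r n u = v" using u(3) by (intro nth_equalityI) auto
    then show "u \<in> cyl r n N X" using u by (simp add: cyl_def)
  next
    fix u assume "u \<in> cyl r n N X"
    then show "u \<in> {u. length u = N \<and> (\<exists>v\<in>X. \<forall>(i,j)\<in>set ?E. u!i = v!j)}"
      by (auto simp: cyl_def intro!: bexI[of _ "proj r n u"])
  qed
  then show ?thesis using defG[OF assms(1) E] by simp
qed

lemma proj_Defs:
  assumes "Y \<in> Defs S N B" "\<forall>i<n. r i < N"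
  shows "proj r n ` Y \<in> Defs S n B"
proof -
  let ?E = "map (\<lambda>i. (i, r i)) [0..<n]"
  have E: "\<forall>(i,j)\<in>set ?E. i < n \<and> j < N" using assms(2) by auto
  have "{v. length v = n \<and> (\<exists>u\<in>Y. \<forall>(i,j)\<in>set ?E. v!i = u!j)} = proj r n ` Y"
  proof (intro set_eqI iffI)
    fix v assume "v \<in> {v. length v = n \<and> (\<exists>u\<in>Y. \<forall>(i,j)\<in>set ?E. v!i = u!j)}"
    then obtain u where u: "length v = n" "u \<in> Y" "\<forall>j<n. v ! j = u ! r j" by auto
    then have "proj r n u = v" by (intro nth_equalityI) auto
    then show "v \<in> proj r n ` Y" using u by blast
  qed auto
  then show ?thesis using defG[OF assms(1) E] by simp
qed

lemma proj_lift:
  assumes "inj_on r {..<n}" "\<forall>i<n. r i < N" "length v = n"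
  shows "\<exists>u. length u = N \<and> proj r n u = v"
proof -
  define u where "u = map (\<lambda>j. if j \<in> r ` {..<n} then v ! (the_inv_into {..<n} r j) else v ! 0) [0..<N]"
  have "proj r n u = v"
  proof (rule nth_equalityI)
    show "length (proj r n u) = length v" using assms by simp
    fix i assume "i < length (proj r n u)"
    then have i: "i < n" by simp
    then have "r i < N" using assms by auto
    then show "proj r n u ! i = v ! i"
      using i the_inv_into_f_f[OF assms(1)] by (simp add: u_def)
  qed
  moreover have "length u = N" by (simp add: u_def)
  ultimately show ?thesis by blast
qed

lemma proj_cyl:
  assumes "inj_on r {..<n}" "\<forall>i<n. r i < N" "X \<subseteq> {v. length v = n}"
  shows "proj r n ` cyl r n N X = X"
proof (intro set_eqI iffI)
  fix v assume "v \<in> X"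
  then obtain u where "length u = N" "proj r n u = v" using proj_lift[OF assms(1,2)] assms(3) by blast
  then show "v \<in> proj r n ` cyl r n N X" using \<open>v \<in> X\<close> by (auto simp: cyl_def)
qed (auto simp: cyl_def)

lemma cyl_Sp: "cyl r n N {v. length v = n} = {u. length u = N}"
  by (auto simp: cyl_def)
lemma cyl_Int: "cyl r n N (X \<inter> Y) = cyl r n N X \<inter> cyl r n N Y"
  by (auto simp: cyl_def)
lemma cyl_Un: "cyl r n N (X \<union> Y) = cyl r n N X \<union> cyl r n N Y"
  by (auto simp: cyl_def)
lemma cyl_Diff: "cyl r n N (X - Y) = cyl r n N X - cyl r n N Y"
  by (auto simp: cyl_def)
lemma cyl_sub: "cyl r n N X \<subseteq> {u. length u = N}"
  by (auto simp: cyl_def)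

lemma proj_proj: "\<forall>i<n. r2 i < n1 \<Longrightarrow> proj r2 n (proj r1 n1 u) = proj (\<lambda>i. r1 (r2 i)) n u"
  by (auto simp: proj_def)

lemma cyl_cyl: "\<forall>i<n. r2 i < n1 \<Longrightarrow> cyl r1 n1 N (cyl r2 n n1 X) = cyl (\<lambda>i. r1 (r2 i)) n N X"
  by (auto simp: cyl_def proj_proj)

lemma alg_cyl: assumes "alg {v. length v = n} A" shows "alg {u. length u = N} (cyl r n N ` A)"
  unfolding alg_def
proof (intro conjI ballI)
  show "{u. length u = N} \<in> cyl r n N ` A" using alg_Sp[OF assms] cyl_Sp[of r n N, symmetric] by blast
  show "Z \<subseteq> {u. length u = N}" if "Z \<in> cyl r n N ` A" for Z using that cyl_sub by blast
  show "{u. length u = N} - Z \<in> cyl r n N ` A" if Z: "Z \<in> cyl r n N ` A" for Z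
  proof -
    obtain X where "X \<in> A" "Z = cyl r n N X" using Z by blast
    then have "{u. length u = N} - Z = cyl r n N ({v. length v = n} - X)" by (simp add: cyl_Diff cyl_Sp)
    then show ?thesis using alg_compl[OF assms \<open>X \<in> A\<close>] by blast
  qed
  show "Z1 \<inter> Z2 \<in> cyl r n N ` A" if Z: "Z1 \<in> cyl r n N ` A" "Z2 \<in> cyl r n N ` A" for Z1 Z2
  proof -
    obtain X1 X2 where "X1 \<in> A" "Z1 = cyl r n N X1" "X2 \<in> A" "Z2 = cyl r n N X2" using Z by blast
    then show ?thesis using alg_Int[OF assms] by (auto simp: cyl_Int[symmetric])
  qed
qed

lemma fap_cyl:
  assumes "alg {v. length v = n} A" "fap {v. length v = n} A \<mu>" "inj_on r {..<n}" "\<forall>i<n. r i < N"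
  shows "fap {u. length u = N} (cyl r n N ` A) (\<lambda>Z. \<mu> (proj r n ` Z))"
proof -
  have pc: "proj r n ` cyl r n N X = X" if "X \<in> A" for X
    using proj_cyl[OF assms(3,4)] alg_sub[OF assms(1) that] by blast
  have Sp: "proj r n ` {u. length u = N} = {v. length v = n}"
    using proj_cyl[OF assms(3,4), of "{v. length v = n}"] by (simp add: cyl_Sp)
  show ?thesis unfolding fap_def
  proof (intro conjI ballI impI)
    show "\<mu> (proj r n ` {u. length u = N}) = 1" unfolding Sp by (rule fap_Sp[OF assms(2)])
  next
    fix Z assume "Z \<in> cyl r n N ` A"
    then obtain X where "X \<in> A" "Z = cyl r n N X" by blast
    then show "0 \<le> \<mu> (proj r n ` Z)" using pc fap_nonneg[OF assms(2)] by simp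
  next
    fix Z1 Z2 assume "Z1 \<in> cyl r n N ` A" "Z2 \<in> cyl r n N ` A" "Z1 \<inter> Z2 = {}"
    then obtain X1 X2 where X: "X1 \<in> A" "Z1 = cyl r n N X1" "X2 \<in> A" "Z2 = cyl r n N X2" "cyl r n N (X1 \<inter> X2) = {}"
      by (auto simp: cyl_Int)
    have "X1 \<inter> X2 = {}" using pc[of "X1 \<inter> X2"] X(1,3,5) alg_Int[OF assms(1)] by auto
    moreover have "proj r n ` (Z1 \<union> Z2) = X1 \<union> X2"
      using X pc[of "X1 \<union> X2"] alg_Un[OF assms(1)] by (simp add: cyl_Un)
    ultimately show "\<mu> (proj r n ` (Z1 \<union> Z2)) = \<mu> (proj r n ` Z1) + \<mu> (proj r n ` Z2)"
      using X pc fap_add[OF assms(2)] by simp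
  qed
qed

lemma pix_cyl: "X \<subseteq> {v. length v = n} \<Longrightarrow> {v @ w |v w. v \<in> X \<and> length w = m} = cyl (\<lambda>i. i) n (n+m) X"
proof (intro set_eqI iffI)
  fix u assume X: "X \<subseteq> {v. length v = n}" and "u \<in> {v @ w |v w. v \<in> X \<and> length w = m}"
  then obtain v w where u: "u = v @ w" "v \<in> X" "length w = m" by blast
  have lv: "length v = n" using X u by auto
  have "proj (\<lambda>i. i) n u = v" using lv u by (intro nth_equalityI) (auto simp: nth_append)
  then show "u \<in> cyl (\<lambda>i. i) n (n+m) X" using u lv by (simp add: cyl_def)
next
  fix u assume "u \<in> cyl (\<lambda>i. i) n (n+m) X"
  then have u: "length u = n + m" "proj (\<lambda>i. i) n u \<in> X" by (auto simp: cyl_def)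
  have "proj (\<lambda>i. i) n u = take n u" using u by (intro nth_equalityI) auto
  then show "u \<in> {v @ w |v w. v \<in> X \<and> length w = m}" using u
    by (intro CollectI exI[of _ "take n u"] exI[of _ "drop n u"]) auto
qed

lemma piy_cyl: "Y \<subseteq> {w. length w = m} \<Longrightarrow> {v @ w |v w. length v = n \<and> w \<in> Y} = cyl ((+) n) m (n+m) Y"
proof (intro set_eqI iffI)
  fix u assume Y: "Y \<subseteq> {w. length w = m}" and "u \<in> {v @ w |v w. length v = n \<and> w \<in> Y}"
  then obtain v w where u: "u = v @ w" "length v = n" "w \<in> Y" by blast
  have lw: "length w = m" using Y u by auto
  have "proj ((+) n) m u = w" using lw u by (intro nth_equalityI) (auto simp: nth_append)
  then show "u \<in> cyl ((+) n) m (n+m) Y" using u lw by (simp add: cyl_def)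
next
  fix u assume "u \<in> cyl ((+) n) m (n+m) Y"
  then have u: "length u = n + m" "proj ((+) n) m u \<in> Y" by (auto simp: cyl_def)
  have "proj ((+) n) m u = drop n u" using u by (intro nth_equalityI) auto
  then show "u \<in> {v @ w |v w. length v = n \<and> w \<in> Y}" using u
    by (intro CollectI exI[of _ "take n u"] exI[of _ "drop n u"]) auto
qed

lemma pi_x_cyl: "pi_x S n m B \<omega> = (\<lambda>X. if X \<in> Defs S n B then \<omega> (cyl (\<lambda>i. i) n (n+m) X) else 0)"
  unfolding pi_x_def by (intro ext) (simp add: pix_cyl[OF Defs_sub])

lemma pi_y_cyl: "pi_y S n m B \<omega> = (\<lambda>Y. if Y \<in> Defs S m B then \<omega> (cyl ((+) n) m (n+m) Y) else 0)"
  unfolding pi_y_def by (intro ext) (simp add: piy_cyl[OF Defs_sub])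

lemma keisler_marg:
  assumes "keisler S N B \<omega>" "inj_on r {..<n}" "\<forall>i<n. r i < N"
  shows "keisler S n B (\<lambda>X. if X \<in> Defs S n B then \<omega> (cyl r n N X) else 0)"
  unfolding keisler_def
proof (intro conjI ballI impI allI)
  have F: "fap {u. length u = N} (Defs S N B) \<omega>" using assms(1) keisler_fap by blast
  show "(if {v. length v = n} \<in> Defs S n B then \<omega> (cyl r n N {v. length v = n}) else 0) = 1"
    using Sp_Defs fap_Sp[OF F] by (simp add: cyl_Sp)
  show "0 \<le> (if X \<in> Defs S n B then \<omega> (cyl r n N X) else 0)" if "X \<in> Defs S n B" for X
    using that cyl_Defs[OF that assms(3)] fap_nonneg[OF F] by simp
  show "(if X \<union> Y \<in> Defs S n B then \<omega> (cyl r n N (X \<union> Y)) else 0) =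
        (if X \<in> Defs S n B then \<omega> (cyl r n N X) else 0) + (if Y \<in> Defs S n B then \<omega> (cyl r n N Y) else 0)"
    if "X \<in> Defs S n B" "Y \<in> Defs S n B" "X \<inter> Y = {}" for X Y
  proof -
    have "X \<union> Y \<in> Defs S n B" using alg_Un[OF alg_Defs] that by blast
    moreover have "cyl r n N X \<inter> cyl r n N Y = {}" using that(3) unfolding cyl_def by blast
    ultimately show ?thesis using that fap_add[OF F cyl_Defs[OF that(1) assms(3)] cyl_Defs[OF that(2) assms(3)]]
      by (simp add: cyl_Un)
  qed
qed auto



lemma KA0:
  fixes S :: "('f,'r,'u) struc"
  assumes K1: "keisler S n1 B1 \<mu>1" "inj_on r1 {..<n1}" "\<forall>i<n1. r1 i < N"
    and K2: "keisler S n2 B2 \<mu>2" "inj_on r2 {..<n2}" "\<forall>i<n2. r2 i < N"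
    and A0: "alg {u. length u = N} A0" "A0 \<subseteq> cyl r1 n1 N ` Defs S n1 B1" "A0 \<subseteq> cyl r2 n2 N ` Defs S n2 B2"
    and agree: "\<forall>c\<in>A0. \<mu>1 (proj r1 n1 ` c) = \<mu>2 (proj r2 n2 ` c)"
    and sep: "\<forall>X\<in>Defs S n1 B1. \<forall>Y\<in>Defs S n2 B2. cyl r1 n1 N X \<inter> cyl r2 n2 N Y = {} \<longrightarrow>
               (\<exists>c\<in>A0. cyl r1 n1 N X \<subseteq> c \<and> c \<inter> cyl r2 n2 N Y = {})"
  shows "\<exists>\<Omega>. keisler S N UNIV \<Omega> \<and> (\<forall>X\<in>Defs S n1 B1. \<Omega> (cyl r1 n1 N X) = \<mu>1 X) \<and>
             (\<forall>Y\<in>Defs S n2 B2. \<Omega> (cyl r2 n2 N Y) = \<mu>2 Y)"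
proof -
  let ?Sp = "{u :: 'u list. length u = N}"
  let ?A1 = "cyl r1 n1 N ` Defs S n1 B1"
  let ?A2 = "cyl r2 n2 N ` Defs S n2 B2"
  have a1: "alg ?Sp ?A1" "alg ?Sp ?A2" using alg_cyl[OF alg_Defs] by blast+
  have s1: "?A1 \<subseteq> Defs S N UNIV" using cyl_Defs[OF _ K1(3)] Defs_mono[of B1 UNIV] by blast
  have s2: "?A2 \<subseteq> Defs S N UNIV" using cyl_Defs[OF _ K2(3)] Defs_mono[of B2 UNIV] by blast
  have f1: "fap ?Sp ?A1 (\<lambda>Z. \<mu>1 (proj r1 n1 ` Z))"
    using fap_cyl[OF alg_Defs keisler_fap[OF K1(1)] K1(2,3)] .
  have f2: "fap ?Sp ?A2 (\<lambda>Z. \<mu>2 (proj r2 n2 ` Z))"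
    using fap_cyl[OF alg_Defs keisler_fap[OF K2(1)] K2(2,3)] .
  have sep': "\<forall>a\<in>?A1. \<forall>b\<in>?A2. a \<inter> b = {} \<longrightarrow> (\<exists>c\<in>A0. a \<subseteq> c \<and> c \<inter> b = {})"
  proof (intro ballI impI)
    fix a b assume a: "a \<in> ?A1" and b: "b \<in> ?A2" and d: "a \<inter> b = {}"
    obtain X where X: "X \<in> Defs S n1 B1" "a = cyl r1 n1 N X" using a by blast
    obtain Y where Y: "Y \<in> Defs S n2 B2" "b = cyl r2 n2 N Y" using b by blast
    show "\<exists>c\<in>A0. a \<subseteq> c \<and> c \<inter> b = {}" using sep[rule_format, OF X(1) Y(1)] d X(2) Y(2) by simp
  qed
  obtain m where m: "fap ?Sp (Defs S N UNIV) m" "\<forall>a\<in>?A1. m a = \<mu>1 (proj r1 n1 ` a)"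
      "\<forall>a\<in>?A2. m a = \<mu>2 (proj r2 n2 ` a)"
    using amalg[OF alg_Defs a1(1,2) A0(1) s1 s2 A0(2,3) f1 f2 agree sep'] by blast
  define \<Omega> where "\<Omega> = (\<lambda>Z. if Z \<in> Defs S N UNIV then m Z else 0)"
  have "fap ?Sp (Defs S N UNIV) \<Omega>"
    unfolding fap_def
  proof (intro conjI ballI impI)
    show "\<Omega> ?Sp = 1" using fap_Sp[OF m(1)] Sp_Defs by (simp add: \<Omega>_def)
    show "0 \<le> \<Omega> X" if "X \<in> Defs S N UNIV" for X using fap_nonneg[OF m(1) that] that by (simp add: \<Omega>_def)
    show "\<Omega> (X \<union> Y) = \<Omega> X + \<Omega> Y" if "X \<in> Defs S N UNIV" "Y \<in> Defs S N UNIV" "X \<inter> Y = {}" for X Y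
      using fap_add[OF m(1) that] that alg_Un[OF alg_Defs that(1,2)] by (simp add: \<Omega>_def)
  qed
  moreover have "\<forall>X. X \<notin> Defs S N UNIV \<longrightarrow> \<Omega> X = 0" by (simp add: \<Omega>_def)
  ultimately have K: "keisler S N UNIV \<Omega>" unfolding keisler_iff by blast
  have "\<Omega> (cyl r1 n1 N X) = \<mu>1 X" if "X \<in> Defs S n1 B1" for X
  proof -
    have "cyl r1 n1 N X \<in> Defs S N UNIV" using s1 that by blast
    then show ?thesis using m(2) that proj_cyl[OF K1(2,3) Defs_sub[OF that]] by (simp add: \<Omega>_def)
  qed
  moreover have "\<Omega> (cyl r2 n2 N Y) = \<mu>2 Y" if "Y \<in> Defs S n2 B2" for Y
  proof -
    have "cyl r2 n2 N Y \<in> Defs S N UNIV" using s2 that by blast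
    then show ?thesis using m(3) that proj_cyl[OF K2(2,3) Defs_sub[OF that]] by (simp add: \<Omega>_def)
  qed
  ultimately show ?thesis using K by blast
qed

lemma sep_gen:
  assumes "cyl r n N X \<inter> b = {}" "b \<subseteq> {u. length u = N}"
  shows "cyl r n N X \<subseteq> {u. length u = N} - cyl r n N (proj r n ` b) \<and>
         ({u. length u = N} - cyl r n N (proj r n ` b)) \<inter> b = {}"
proof (intro conjI subsetI)
  fix u assume u: "u \<in> cyl r n N X"
  have "u \<notin> cyl r n N (proj r n ` b)"
  proof
    assume "u \<in> cyl r n N (proj r n ` b)"
    then obtain w where w: "w \<in> b" "proj r n u = proj r n w" by (auto simp: cyl_def)
    then have "w \<in> cyl r n N X" using u assms(2) by (auto simp: cyl_def)
    then show False using w(1) assms(1) by blast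
  qed
  then show "u \<in> {u. length u = N} - cyl r n N (proj r n ` b)" using u by (simp add: cyl_def)
next
  show "({u. length u = N} - cyl r n N (proj r n ` b)) \<inter> b = {}"
    using assms(2) by (auto simp: cyl_def)
qed

lemma proj_id: "length u = N \<Longrightarrow> proj (\<lambda>i. i) N u = u"
  by (intro nth_equalityI) auto

lemma cyl_id: "Z \<subseteq> {u. length u = N} \<Longrightarrow> cyl (\<lambda>i. i) N N Z = Z"
  by (auto simp: cyl_def proj_id)

lemma proj_id_img: "Z \<subseteq> {u. length u = N} \<Longrightarrow> proj (\<lambda>i. i) N ` Z = Z"
proof -
  assume Z: "Z \<subseteq> {u. length u = N}"
  have "proj (\<lambda>i. i) N ` Z = (\<lambda>u. u) ` Z" using Z proj_id by (intro image_cong) auto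
  then show ?thesis by simp
qed

lemma KA1:
  fixes S :: "('f,'r,'u) struc"
  assumes K: "keisler S n UNIV \<mu>" "inj_on r {..<n}" "\<forall>i<n. r i < N"
    and T: "keisler S N C \<theta>" and agree: "\<forall>X\<in>Defs S n C. \<theta> (cyl r n N X) = \<mu> X"
  shows "\<exists>\<Omega>. keisler S N UNIV \<Omega> \<and> (\<forall>X\<in>Defs S n UNIV. \<Omega> (cyl r n N X) = \<mu> X) \<and> (\<forall>Z\<in>Defs S N C. \<Omega> Z = \<theta> Z)"
proof -
  let ?A0 = "cyl r n N ` Defs S n C"
  have idinj: "inj_on (\<lambda>i::nat. i) {..<N}" by simp
  have idlt: "\<forall>i<N. (\<lambda>i. i) i < N" by simp
  have A0: "alg {u. length u = N} ?A0" using alg_cyl[OF alg_Defs] .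
  have A01: "?A0 \<subseteq> cyl r n N ` Defs S n UNIV" using Defs_mono[of C UNIV] by blast
  have A02: "?A0 \<subseteq> cyl (\<lambda>i. i) N N ` Defs S N C"
  proof
    fix c assume "c \<in> ?A0"
    then obtain X where X: "X \<in> Defs S n C" "c = cyl r n N X" by blast
    then have "c \<in> Defs S N C" using cyl_Defs[OF _ K(3)] by blast
    moreover have "c = cyl (\<lambda>i. i) N N c" using cyl_id[OF Defs_sub[OF \<open>c \<in> Defs S N C\<close>]] by simp
    ultimately show "c \<in> cyl (\<lambda>i. i) N N ` Defs S N C" by blast
  qed
  have ag: "\<forall>c\<in>?A0. \<mu> (proj r n ` c) = \<theta> (proj (\<lambda>i. i) N ` c)"
  proof
    fix c assume "c \<in> ?A0"
    then obtain X where X: "X \<in> Defs S n C" "c = cyl r n N X" by blast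
    have "proj r n ` c = X" using X proj_cyl[OF K(2,3) Defs_sub[OF X(1)]] by simp
    moreover have "proj (\<lambda>i. i) N ` c = c" using X cyl_sub proj_id_img by metis
    ultimately show "\<mu> (proj r n ` c) = \<theta> (proj (\<lambda>i. i) N ` c)" using agree X by simp
  qed
  have sep: "\<forall>X\<in>Defs S n UNIV. \<forall>Y\<in>Defs S N C. cyl r n N X \<inter> cyl (\<lambda>i. i) N N Y = {} \<longrightarrow>
               (\<exists>c\<in>?A0. cyl r n N X \<subseteq> c \<and> c \<inter> cyl (\<lambda>i. i) N N Y = {})"
  proof (intro ballI impI)
    fix X Y assume X: "X \<in> Defs S n UNIV" and Y: "Y \<in> Defs S N C" and d: "cyl r n N X \<inter> cyl (\<lambda>i. i) N N Y = {}"
    have Yc: "cyl (\<lambda>i. i) N N Y = Y" using cyl_id[OF Defs_sub[OF Y]] .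
    have W: "proj r n ` Y \<in> Defs S n C" using proj_Defs[OF Y K(3)] .
    have "{u. length u = N} - cyl r n N (proj r n ` Y) = cyl r n N ({v. length v = n} - proj r n ` Y)"
      by (simp add: cyl_Diff cyl_Sp)
    moreover have "{v. length v = n} - proj r n ` Y \<in> Defs S n C" using Defs_compl[OF W] .
    ultimately have "{u. length u = N} - cyl r n N (proj r n ` Y) \<in> ?A0" by simp
    then show "\<exists>c\<in>?A0. cyl r n N X \<subseteq> c \<and> c \<inter> cyl (\<lambda>i. i) N N Y = {}"
      using sep_gen[of r n N X Y] d Yc Defs_sub[OF Y] by auto
  qed
  obtain \<Omega> where \<Omega>: "keisler S N UNIV \<Omega>" "\<forall>X\<in>Defs S n UNIV. \<Omega> (cyl r n N X) = \<mu> X"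
      "\<forall>Y\<in>Defs S N C. \<Omega> (cyl (\<lambda>i. i) N N Y) = \<theta> Y"
    using KA0[OF K T idinj idlt A0 A01 A02 ag sep] by blast
  have "\<forall>Z\<in>Defs S N C. \<Omega> Z = \<theta> Z" using \<Omega>(3) cyl_id Defs_sub by metis
  then show ?thesis using \<Omega> by blast
qed



lemma KA2:
  fixes S :: "('f,'r,'u) struc"
  assumes W1: "keisler S (n+m) UNIV \<omega>1" and L2: "keisler S (m+k) B lam2"
    and agree: "\<forall>Y\<in>Defs S m B. \<omega>1 (cyl ((+) n) m (n+m) Y) = lam2 (cyl (\<lambda>i. i) m (m+k) Y)"
  shows "\<exists>\<Omega>. keisler S (n+m+k) UNIV \<Omega> \<and>
     (\<forall>X\<in>Defs S (n+m) UNIV. \<Omega> (cyl (\<lambda>i. i) (n+m) (n+m+k) X) = \<omega>1 X) \<and>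
     (\<forall>Y\<in>Defs S (m+k) B. \<Omega> (cyl ((+) n) (m+k) (n+m+k) Y) = lam2 Y)"
proof -
  define N where "N = n+m+k"
  let ?A0 = "cyl ((+) n) m N ` Defs S m B"
  have i1: "inj_on (\<lambda>i::nat. i) {..<n+m}" "\<forall>i<n+m. (\<lambda>i. i) i < N" by (auto simp: N_def)
  have i2: "inj_on ((+) n) {..<m+k}" "\<forall>i<m+k. (+) n i < N" by (auto simp: N_def)
  have A0: "alg {u. length u = N} ?A0" using alg_cyl[OF alg_Defs] .
  have c1: "cyl ((+) n) m N Y = cyl (\<lambda>i. i) (n+m) N (cyl ((+) n) m (n+m) Y)" for Y :: "'u list set"
    by (simp add: cyl_cyl)
  have c2: "cyl ((+) n) m N Y = cyl ((+) n) (m+k) N (cyl (\<lambda>i. i) m (m+k) Y)" for Y :: "'u list set"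
    by (simp add: cyl_cyl)
  have d1: "Y \<in> Defs S m B \<Longrightarrow> cyl ((+) n) m (n+m) Y \<in> Defs S (n+m) UNIV" for Y
    using cyl_Defs[of Y S m B "(+) n" "n+m"] Defs_mono[of B UNIV S "n+m"] by auto
  have d2: "Y \<in> Defs S m B \<Longrightarrow> cyl (\<lambda>i. i) m (m+k) Y \<in> Defs S (m+k) B" for Y
    using cyl_Defs[of Y S m B "\<lambda>i. i" "m+k"] by auto
  have A01: "?A0 \<subseteq> cyl (\<lambda>i. i) (n+m) N ` Defs S (n+m) UNIV" using c1 d1 by blast
  have A02: "?A0 \<subseteq> cyl ((+) n) (m+k) N ` Defs S (m+k) B" using c2 d2 by blast
  have ag: "\<forall>c\<in>?A0. \<omega>1 (proj (\<lambda>i. i) (n+m) ` c) = lam2 (proj ((+) n) (m+k) ` c)"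
  proof
    fix c assume "c \<in> ?A0"
    then obtain Y where Y: "Y \<in> Defs S m B" "c = cyl ((+) n) m N Y" by blast
    have "proj (\<lambda>i. i) (n+m) ` c = cyl ((+) n) m (n+m) Y"
      using Y c1 proj_cyl[OF i1 Defs_sub[OF d1[OF Y(1)]]] by simp
    moreover have "proj ((+) n) (m+k) ` c = cyl (\<lambda>i. i) m (m+k) Y"
      using Y c2 proj_cyl[OF i2 Defs_sub[OF d2[OF Y(1)]]] by simp
    ultimately show "\<omega>1 (proj (\<lambda>i. i) (n+m) ` c) = lam2 (proj ((+) n) (m+k) ` c)" using agree Y by simp
  qed
  have sep: "\<forall>X\<in>Defs S (n+m) UNIV. \<forall>Y\<in>Defs S (m+k) B.
      cyl (\<lambda>i. i) (n+m) N X \<inter> cyl ((+) n) (m+k) N Y = {} \<longrightarrow>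
      (\<exists>c\<in>?A0. cyl (\<lambda>i. i) (n+m) N X \<subseteq> c \<and> c \<inter> cyl ((+) n) (m+k) N Y = {})"
  proof (intro ballI impI)
    fix X Y assume X: "X \<in> Defs S (n+m) UNIV" and Y: "Y \<in> Defs S (m+k) B"
      and d: "cyl (\<lambda>i. i) (n+m) N X \<inter> cyl ((+) n) (m+k) N Y = {}"
    define W where "W = proj (\<lambda>i. i) m ` Y"
    have WD: "W \<in> Defs S m B" unfolding W_def by (rule proj_Defs[OF Y]) auto
    define c where "c = {u. length u = N} - cyl ((+) n) m N W"
    have "c = cyl ((+) n) m N ({v. length v = m} - W)" by (simp add: c_def cyl_Diff cyl_Sp)
    then have cA: "c \<in> ?A0" using Defs_compl[OF WD] by blast
    have lY: "length y = m + k" if "y \<in> Y" for y using Defs_sub[OF Y] that by auto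
    have sub: "cyl (\<lambda>i. i) (n+m) N X \<subseteq> c"
    proof
      fix u assume u: "u \<in> cyl (\<lambda>i. i) (n+m) N X"
      have lu: "length u = N" using u by (simp add: cyl_def)
      have "u \<notin> cyl ((+) n) m N W"
      proof
        assume "u \<in> cyl ((+) n) m N W"
        then obtain y where y: "y \<in> Y" "proj ((+) n) m u = proj (\<lambda>i. i) m y" by (auto simp: cyl_def W_def)
        have ly: "length y = m + k" using lY y(1) .
        define u' where "u' = take (n+m) u @ drop m y"
        have lu': "length u' = N" using lu ly by (simp add: u'_def N_def)
        have "proj (\<lambda>i. i) (n+m) u' = proj (\<lambda>i. i) (n+m) u"
          using lu by (intro nth_equalityI) (auto simp: u'_def nth_append N_def)
        then have "u' \<in> cyl (\<lambda>i. i) (n+m) N X" using u lu' by (simp add: cyl_def)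
        moreover have "proj ((+) n) (m+k) u' = y"
        proof (rule nth_equalityI)
          show "length (proj ((+) n) (m+k) u') = length y" using ly by simp
          fix j assume "j < length (proj ((+) n) (m+k) u')"
          then have j: "j < m + k" by simp
          show "proj ((+) n) (m+k) u' ! j = y ! j"
          proof (cases "j < m")
            case True
            have "proj ((+) n) m u ! j = proj (\<lambda>i. i) m y ! j" using y(2) by simp
            then have "u ! (n + j) = y ! j" using True by simp
            then show ?thesis using True j lu by (simp add: u'_def nth_append N_def)
          next
            case False
            then show ?thesis using j lu ly by (simp add: u'_def nth_append N_def)
          qed
        qed
        then have "u' \<in> cyl ((+) n) (m+k) N Y" using y(1) lu' by (simp add: cyl_def)
        ultimately show False using d by blast
      qed
      then show "u \<in> c" using lu by (simp add: c_def)
    qed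
    have "c \<inter> cyl ((+) n) (m+k) N Y = {}"
    proof (rule ccontr)
      assume "c \<inter> cyl ((+) n) (m+k) N Y \<noteq> {}"
      then obtain u where u: "u \<in> c" "u \<in> cyl ((+) n) (m+k) N Y" by blast
      have "proj (\<lambda>i. i) m (proj ((+) n) (m+k) u) = proj ((+) n) m u" by (simp add: proj_proj)
      then have "proj ((+) n) m u \<in> W" using u(2) unfolding W_def cyl_def by (metis (mono_tags, lifting) image_eqI mem_Collect_eq)
      then show False using u unfolding c_def cyl_def by auto
    qed
    then show "\<exists>c\<in>?A0. cyl (\<lambda>i. i) (n+m) N X \<subseteq> c \<and> c \<inter> cyl ((+) n) (m+k) N Y = {}"
      using cA sub by blast
  qed
  show ?thesis using KA0[OF W1 i1 L2 i2 A0 A01 A02 ag sep] by (simp add: N_def)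
qed



lemma cyl_cong: "(\<forall>i<n. r i = r' i) \<Longrightarrow> cyl r n N X = cyl r' n N X"
proof -
  assume h: "\<forall>i<n. r i = r' i"
  have "proj r n u = proj r' n u" for u :: "'a list" using h by (simp add: proj_def)
  then show ?thesis by (simp add: cyl_def)
qed

lemma cylD: assumes "X \<in> Defs S n B" "\<forall>i<n. r i < N" "B \<subseteq> B'" shows "cyl r n N X \<in> Defs S N B'"
proof -
  have "cyl r n N X \<in> Defs S N B" by (rule cyl_Defs[OF assms(1,2)])
  then show ?thesis using Defs_mono[OF assms(3), of S N] by blast
qed

lemma Defs_UNIV: "X \<in> Defs S n B \<Longrightarrow> X \<in> Defs S n UNIV"
  using Defs_mono[of B UNIV S n] by blast

lemma restr_keisler: assumes "keisler S N UNIV \<omega>" shows "keisler S N C (restr S N C \<omega>)"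
proof -
  have F: "fap {v. length v = N} (Defs S N UNIV) \<omega>" using keisler_fap[OF assms] .
  have sub: "Defs S N C \<subseteq> Defs S N UNIV" by (rule Defs_mono) simp
  have Sp: "{v. length v = N} \<in> Defs S N C" by (rule Sp_Defs)
  show ?thesis unfolding keisler_def
  proof (intro conjI ballI impI allI)
    show "restr S N C \<omega> {v. length v = N} = 1" using Sp fap_Sp[OF F] by (simp add: restr_def)
    show "0 \<le> restr S N C \<omega> X" if "X \<in> Defs S N C" for X
    proof -
      have "X \<in> Defs S N UNIV" using that sub by blast
      then show ?thesis using that fap_nonneg[OF F] by (simp add: restr_def)
    qed
    show "restr S N C \<omega> (X \<union> Y) = restr S N C \<omega> X + restr S N C \<omega> Y"
      if "X \<in> Defs S N C" "Y \<in> Defs S N C" "X \<inter> Y = {}" for X Y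
    proof -
      have "X \<union> Y \<in> Defs S N C" using alg_Un[OF alg_Defs that(1,2)] .
      moreover have "X \<in> Defs S N UNIV" "Y \<in> Defs S N UNIV" using that sub by blast+
      ultimately show ?thesis using that fap_add[OF F] by (simp add: restr_def)
    qed
    show "restr S N C \<omega> X = 0" if "X \<notin> Defs S N C" for X using that by (simp add: restr_def)
  qed
qed

lemma keisler_pi_x: "keisler S (n+m) B \<omega> \<Longrightarrow> keisler S n B (pi_x S n m B \<omega>)"
  unfolding pi_x_cyl by (rule keisler_marg) auto

lemma keisler_pi_y: "keisler S (n+m) B \<omega> \<Longrightarrow> keisler S m B (pi_y S n m B \<omega>)"
  unfolding pi_y_cyl by (rule keisler_marg) auto

lemma trans_EA:
  fixes S :: "('f,'r,'u) struc"
  assumes MU: "keisler S n UNIV \<mu>" and NU: "keisler S m UNIV \<nu>" and ETA: "keisler S k UNIV \<eta>"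
    and h1: "geEA S A n m \<mu> \<nu>" and h2: "geEA S B m k \<nu> \<eta>"
  shows "geEA S (A \<union> B) n k \<mu> \<eta>"
proof -
  obtain l1 where L1: "keisler S (n+m) A l1" "pi_x S n m A l1 = restr S n A \<mu>"
    and H1: "\<And>\<omega>. keisler S (n+m) UNIV \<omega> \<Longrightarrow> restr S (n+m) A \<omega> = l1 \<Longrightarrow> pi_x S n m UNIV \<omega> = \<mu> \<Longrightarrow> pi_y S n m UNIV \<omega> = \<nu>"
    using h1 unfolding geEA_def by blast
  obtain l2 where L2: "keisler S (m+k) B l2" "pi_x S m k B l2 = restr S m B \<nu>"
    and H2: "\<And>\<omega>. keisler S (m+k) UNIV \<omega> \<Longrightarrow> restr S (m+k) B \<omega> = l2 \<Longrightarrow> pi_x S m k UNIV \<omega> = \<nu> \<Longrightarrow> pi_y S m k UNIV \<omega> = \<eta>"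
    using h2 unfolding geEA_def by blast
  define C where "C = A \<union> B"
  define N where "N = n + m + k"
  have AC: "A \<subseteq> C" and BC: "B \<subseteq> C" by (auto simp: C_def)
  have ag1: "\<forall>X\<in>Defs S n A. l1 (cyl (\<lambda>i. i) n (n+m) X) = \<mu> X"
  proof
    fix X assume X: "X \<in> Defs S n A"
    have "pi_x S n m A l1 X = restr S n A \<mu> X" using L1(2) by simp
    then show "l1 (cyl (\<lambda>i. i) n (n+m) X) = \<mu> X" using X by (simp add: pi_x_cyl restr_def)
  qed
  obtain \<omega>1 where W1: "keisler S (n+m) UNIV \<omega>1" "\<forall>X\<in>Defs S n UNIV. \<omega>1 (cyl (\<lambda>i. i) n (n+m) X) = \<mu> X"
      "\<forall>Z\<in>Defs S (n+m) A. \<omega>1 Z = l1 Z"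
    using KA1[OF MU _ _ L1(1) ag1] by auto
  have "pi_x S n m UNIV \<omega>1 = \<mu>"
    using W1(2) keisler_zero[OF MU] by (auto simp: pi_x_cyl fun_eq_iff)
  moreover have "restr S (n+m) A \<omega>1 = l1"
    using W1(3) keisler_zero[OF L1(1)] by (auto simp: restr_def fun_eq_iff)
  ultimately have nu1: "pi_y S n m UNIV \<omega>1 = \<nu>" using H1[OF W1(1)] by blast
  have ag2: "\<forall>Y\<in>Defs S m B. \<omega>1 (cyl ((+) n) m (n+m) Y) = l2 (cyl (\<lambda>i. i) m (m+k) Y)"
  proof
    fix Y assume Y: "Y \<in> Defs S m B"
    have YU: "Y \<in> Defs S m UNIV" using Defs_UNIV[OF Y] .
    have "\<omega>1 (cyl ((+) n) m (n+m) Y) = \<nu> Y" using fun_cong[OF nu1, of Y] YU by (simp add: pi_y_cyl)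
    moreover have "l2 (cyl (\<lambda>i. i) m (m+k) Y) = \<nu> Y"
    proof -
      have "pi_x S m k B l2 Y = restr S m B \<nu> Y" using L2(2) by simp
      then show ?thesis using Y by (simp add: pi_x_cyl restr_def)
    qed
    ultimately show "\<omega>1 (cyl ((+) n) m (n+m) Y) = l2 (cyl (\<lambda>i. i) m (m+k) Y)" by simp
  qed
  obtain \<Omega>1 where O1: "keisler S N UNIV \<Omega>1"
      "\<forall>X\<in>Defs S (n+m) UNIV. \<Omega>1 (cyl (\<lambda>i. i) (n+m) N X) = \<omega>1 X"
      "\<forall>Y\<in>Defs S (m+k) B. \<Omega>1 (cyl ((+) n) (m+k) N Y) = l2 Y"
    using KA2[OF W1(1) L2(1) ag2] unfolding N_def by blast
  define rxz where "rxz = (\<lambda>i::nat. if i < n then i else i + m)"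
  have rinj: "inj_on rxz {..<n+k}" by (auto simp: rxz_def inj_on_def split: if_splits)
  have rlt: "\<forall>i<n+k. rxz i < N" by (auto simp: rxz_def N_def)
  define l where "l = (\<lambda>Z. if Z \<in> Defs S (n+k) C then \<Omega>1 (cyl rxz (n+k) N Z) else 0)"
  have RO: "keisler S N C (restr S N C \<Omega>1)" using restr_keisler[OF O1(1)] .
  have "keisler S (n+k) C (\<lambda>Z. if Z \<in> Defs S (n+k) C then restr S N C \<Omega>1 (cyl rxz (n+k) N Z) else 0)"
    using keisler_marg[OF RO rinj rlt] .
  moreover have "(\<lambda>Z. if Z \<in> Defs S (n+k) C then restr S N C \<Omega>1 (cyl rxz (n+k) N Z) else 0) = l"
  proof (rule ext)
    fix Z
    show "(if Z \<in> Defs S (n+k) C then restr S N C \<Omega>1 (cyl rxz (n+k) N Z) else 0) = l Z"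
    proof (cases "Z \<in> Defs S (n+k) C")
      case True
      then have "cyl rxz (n+k) N Z \<in> Defs S N C" by (rule cyl_Defs[OF _ rlt])
      then show ?thesis using True by (simp add: l_def restr_def)
    next
      case False
      then show ?thesis by (simp add: l_def)
    qed
  qed
  ultimately have L: "keisler S (n+k) C l" by simp
  have c_id_n: "cyl (\<lambda>i. i) (n+m) N (cyl (\<lambda>i. i) n (n+m) X) = cyl (\<lambda>i. i) n N X" for X :: "'u list set"
    by (simp add: cyl_cyl)
  have c_rxz_n: "cyl rxz (n+k) N (cyl (\<lambda>i. i) n (n+k) X) = cyl (\<lambda>i. i) n N X" for X :: "'u list set"
    by (simp add: cyl_cyl cyl_cong rxz_def)
  have Lx: "pi_x S n k C l = restr S n C \<mu>"
  proof (rule ext)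
    fix X
    show "pi_x S n k C l X = restr S n C \<mu> X"
    proof (cases "X \<in> Defs S n C")
      case True
      have XU: "X \<in> Defs S n UNIV" using Defs_UNIV[OF True] .
      have c1: "cyl (\<lambda>i. i) n (n+k) X \<in> Defs S (n+k) C" using cylD[OF True] by auto
      have c2: "cyl (\<lambda>i. i) n (n+m) X \<in> Defs S (n+m) UNIV" using cylD[OF True] by auto
      have "pi_x S n k C l X = \<Omega>1 (cyl (\<lambda>i. i) n N X)"
        using True c1 by (simp add: pi_x_cyl l_def c_rxz_n)
      also have "\<dots> = \<omega>1 (cyl (\<lambda>i. i) n (n+m) X)" using O1(2) c2 c_id_n by metis
      also have "\<dots> = \<mu> X" using W1(2) XU by blast
      finally show ?thesis using True by (simp add: restr_def)
    next
      case False
      then show ?thesis by (simp add: pi_x_cyl restr_def)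
    qed
  qed
  have main: "pi_y S n k UNIV \<omega> = \<eta>"
    if W: "keisler S (n+k) UNIV \<omega>" "restr S (n+k) C \<omega> = l" "pi_x S n k UNIV \<omega> = \<mu>" for \<omega>
  proof -
    have ag3: "\<forall>X\<in>Defs S (n+k) C. restr S N C \<Omega>1 (cyl rxz (n+k) N X) = \<omega> X"
    proof
      fix X assume X: "X \<in> Defs S (n+k) C"
      have "restr S (n+k) C \<omega> X = l X" using W(2) by simp
      then show "restr S N C \<Omega>1 (cyl rxz (n+k) N X) = \<omega> X"
        using X cyl_Defs[OF X rlt] by (simp add: restr_def l_def)
    qed
    obtain \<Omega> where O: "keisler S N UNIV \<Omega>" "\<forall>X\<in>Defs S (n+k) UNIV. \<Omega> (cyl rxz (n+k) N X) = \<omega> X"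
        "\<forall>Z\<in>Defs S N C. \<Omega> Z = restr S N C \<Omega>1 Z"
      using KA1[OF W(1) rinj rlt RO ag3] by blast
    have OO: "\<Omega> Z = \<Omega>1 Z" if "Z \<in> Defs S N C" for Z using O(3) that by (simp add: restr_def)
    define w1 where "w1 = pi_x S (n+m) k UNIV \<Omega>"
    have KW1: "keisler S (n+m) UNIV w1" unfolding w1_def by (rule keisler_pi_x) (use O(1) N_def in simp)
    have w1c: "w1 Z = \<Omega> (cyl (\<lambda>i. i) (n+m) N Z)" if "Z \<in> Defs S (n+m) UNIV" for Z
      using that by (simp add: w1_def pi_x_cyl N_def)
    have "restr S (n+m) A w1 = l1"
    proof (rule ext)
      fix Z show "restr S (n+m) A w1 Z = l1 Z"
      proof (cases "Z \<in> Defs S (n+m) A")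
        case True
        have ZU: "Z \<in> Defs S (n+m) UNIV" using Defs_UNIV[OF True] .
        have cC: "cyl (\<lambda>i. i) (n+m) N Z \<in> Defs S N C" using cylD[OF True _ AC] by (auto simp: N_def)
        have "w1 Z = \<Omega>1 (cyl (\<lambda>i. i) (n+m) N Z)" using w1c[OF ZU] OO[OF cC] by simp
        also have "\<dots> = \<omega>1 Z" using O1(2) ZU by blast
        also have "\<dots> = l1 Z" using W1(3) True by blast
        finally show ?thesis using True by (simp add: restr_def)
      next
        case False
        then show ?thesis using keisler_zero[OF L1(1) False] by (simp add: restr_def)
      qed
    qed
    moreover have "pi_x S n m UNIV w1 = \<mu>"
    proof (rule ext)
      fix X show "pi_x S n m UNIV w1 X = \<mu> X"
      proof (cases "X \<in> Defs S n UNIV")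
        case True
        have c2: "cyl (\<lambda>i. i) n (n+m) X \<in> Defs S (n+m) UNIV" using cylD[OF True] by auto
        have c3: "cyl (\<lambda>i. i) n (n+k) X \<in> Defs S (n+k) UNIV" using cylD[OF True] by auto
        have "pi_x S n m UNIV w1 X = \<Omega> (cyl (\<lambda>i. i) n N X)"
          using True w1c[OF c2] c_id_n by (simp add: pi_x_cyl)
        also have "\<dots> = \<omega> (cyl (\<lambda>i. i) n (n+k) X)" using O(2) c3 c_rxz_n by metis
        also have "\<dots> = pi_x S n k UNIV \<omega> X" using True by (simp add: pi_x_cyl)
        also have "\<dots> = \<mu> X" using W(3) by simp
        finally show ?thesis .
      next
        case False
        then show ?thesis using keisler_zero[OF MU False] by (simp add: pi_x_cyl)
      qed
    qed
    ultimately have nuw1: "pi_y S n m UNIV w1 = \<nu>" using H1[OF KW1] by blast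
    have NN: "n + (m + k) = N" by (simp add: N_def)
    define w2 where "w2 = pi_y S n (m+k) UNIV \<Omega>"
    have KW2: "keisler S (m+k) UNIV w2" unfolding w2_def by (rule keisler_pi_y) (use O(1) NN in simp)
    have w2c: "w2 Z = \<Omega> (cyl ((+) n) (m+k) N Z)" if "Z \<in> Defs S (m+k) UNIV" for Z
      using that by (simp add: w2_def pi_y_cyl NN)
    have "restr S (m+k) B w2 = l2"
    proof (rule ext)
      fix Z show "restr S (m+k) B w2 Z = l2 Z"
      proof (cases "Z \<in> Defs S (m+k) B")
        case True
        have ZU: "Z \<in> Defs S (m+k) UNIV" using Defs_UNIV[OF True] .
        have cC: "cyl ((+) n) (m+k) N Z \<in> Defs S N C" using cylD[OF True _ BC] by (auto simp: N_def)
        have "w2 Z = \<Omega>1 (cyl ((+) n) (m+k) N Z)" using w2c[OF ZU] OO[OF cC] by simp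
        also have "\<dots> = l2 Z" using O1(3) True by blast
        finally show ?thesis using True by (simp add: restr_def)
      next
        case False
        then show ?thesis using keisler_zero[OF L2(1) False] by (simp add: restr_def)
      qed
    qed
    moreover have "pi_x S m k UNIV w2 = \<nu>"
    proof (rule ext)
      fix Y show "pi_x S m k UNIV w2 Y = \<nu> Y"
      proof (cases "Y \<in> Defs S m UNIV")
        case True
        have c2: "cyl (\<lambda>i. i) m (m+k) Y \<in> Defs S (m+k) UNIV" using cylD[OF True] by auto
        have c3: "cyl ((+) n) m (n+m) Y \<in> Defs S (n+m) UNIV" using cylD[OF True] by auto
        have e1: "cyl ((+) n) (m+k) N (cyl (\<lambda>i. i) m (m+k) Y) = cyl (\<lambda>i. i) (n+m) N (cyl ((+) n) m (n+m) Y)"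
          by (simp add: cyl_cyl)
        have "pi_x S m k UNIV w2 Y = \<Omega> (cyl ((+) n) (m+k) N (cyl (\<lambda>i. i) m (m+k) Y))"
          using True w2c[OF c2] by (simp add: pi_x_cyl)
        also have "\<dots> = w1 (cyl ((+) n) m (n+m) Y)" using e1 w1c[OF c3] by simp
        also have "\<dots> = pi_y S n m UNIV w1 Y" using True by (simp add: pi_y_cyl)
        also have "\<dots> = \<nu> Y" using nuw1 by simp
        finally show ?thesis .
      next
        case False
        then show ?thesis using keisler_zero[OF NU False] by (simp add: pi_x_cyl)
      qed
    qed
    ultimately have etaw2: "pi_y S m k UNIV w2 = \<eta>" using H2[OF KW2] by blast
    show "pi_y S n k UNIV \<omega> = \<eta>"
    proof (rule ext)
      fix Z show "pi_y S n k UNIV \<omega> Z = \<eta> Z"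
      proof (cases "Z \<in> Defs S k UNIV")
        case True
        have c2: "cyl ((+) n) k (n+k) Z \<in> Defs S (n+k) UNIV" using cylD[OF True] by auto
        have c3: "cyl ((+) m) k (m+k) Z \<in> Defs S (m+k) UNIV" using cylD[OF True] by auto
        have e1: "cyl rxz (n+k) N (cyl ((+) n) k (n+k) Z) = cyl ((+) n) (m+k) N (cyl ((+) m) k (m+k) Z)"
          by (simp add: cyl_cyl cyl_cong rxz_def add.assoc add.left_commute)
        have "pi_y S n k UNIV \<omega> Z = \<omega> (cyl ((+) n) k (n+k) Z)" using True by (simp add: pi_y_cyl)
        also have "\<dots> = \<Omega> (cyl rxz (n+k) N (cyl ((+) n) k (n+k) Z))" using O(2) c2 by simp
        also have "\<dots> = w2 (cyl ((+) m) k (m+k) Z)" using e1 w2c[OF c3] by simp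
        also have "\<dots> = pi_y S m k UNIV w2 Z" using True by (simp add: pi_y_cyl)
        also have "\<dots> = \<eta> Z" using etaw2 by simp
        finally show ?thesis .
      next
        case False
        then show ?thesis using keisler_zero[OF ETA False] by (simp add: pi_y_cyl)
      qed
    qed
  qed
  show ?thesis unfolding geEA_def C_def[symmetric]
    using L Lx main by blast
qed



lemma dg_Defs:
  assumes X: "X \<in> Defs S (n+n) B"
  shows "{v. length v = n \<and> v @ v \<in> X} \<in> Defs S n B"
proof -
  let ?E = "map (\<lambda>i. (i,i)) [0..<n] @ map (\<lambda>i. (i, n+i)) [0..<n]"
  have E: "\<forall>(i,j)\<in>set ?E. i < n \<and> j < n+n" by auto
  have eq: "{v. length v = n \<and> (\<exists>u\<in>X. \<forall>(i,j)\<in>set ?E. v!i = u!j)} = {v. length v = n \<and> v @ v \<in> X}"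
  proof (intro set_eqI iffI)
    fix v assume "v \<in> {v. length v = n \<and> (\<exists>u\<in>X. \<forall>(i,j)\<in>set ?E. v!i = u!j)}"
    then obtain u where v0: "length v = n" "u \<in> X" "\<forall>p\<in>set ?E. case p of (i,j) \<Rightarrow> v!i = u!j" by blast
    have v34: "v!i = u!i \<and> v!i = u!(n+i)" if i: "i < n" for i
    proof -
      have "(i,i) \<in> set ?E" "(i,n+i) \<in> set ?E" using i by auto
      then show ?thesis using bspec[OF v0(3)] by fastforce
    qed
    have v: "length v = n" "u \<in> X" "\<forall>i<n. v!i = u!i" "\<forall>i<n. v!i = u!(n+i)"
      using v0(1,2) v34 by blast+
    have lu: "length u = n + n" using Defs_sub[OF X] v(2) by auto
    have "v @ v = u"
    proof (rule nth_equalityI)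
      show "length (v @ v) = length u" using lu v by simp
      fix j assume "j < length (v @ v)"
      then have j: "j < n + n" using v by simp
      show "(v @ v) ! j = u ! j"
      proof (cases "j < n")
        case True then show ?thesis using v by (simp add: nth_append)
      next
        case False
        then have "(v @ v) ! j = v ! (j - n)" using v by (simp add: nth_append)
        also have "\<dots> = u ! (n + (j - n))" using v(4) j False by simp
        finally show ?thesis using False by simp
      qed
    qed
    then show "v \<in> {v. length v = n \<and> v @ v \<in> X}" using v by simp
  next
    fix v assume "v \<in> {v. length v = n \<and> v @ v \<in> X}"
    then show "v \<in> {v. length v = n \<and> (\<exists>u\<in>X. \<forall>(i,j)\<in>set ?E. v!i = u!j)}"
      by (auto intro!: bexI[of _ "v @ v"] simp: nth_append)
  qed
  show ?thesis by (subst eq[symmetric]) (rule defG[OF X E])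
qed

lemma D_Defs: "{u. length u = n+n \<and> (\<forall>i<n. u!i = u!(n+i))} \<in> Defs S (n+n) B"
proof -
  let ?E = "map (\<lambda>i. (i,i)) [0..<n] @ map (\<lambda>i. (n+i, i)) [0..<n]"
  have E: "\<forall>(i,j)\<in>set ?E. i < n+n \<and> j < n" by auto
  have eq: "{u. length u = n+n \<and> (\<exists>v\<in>{v. length v = n}. \<forall>(i,j)\<in>set ?E. u!i = v!j)} =
        {u. length u = n+n \<and> (\<forall>i<n. u!i = u!(n+i))}"
  proof (intro set_eqI iffI)
    fix u assume "u \<in> {u. length u = n+n \<and> (\<exists>v\<in>{v. length v = n}. \<forall>(i,j)\<in>set ?E. u!i = v!j)}"
    then obtain v where v: "length u = n+n" "\<forall>p\<in>set ?E. case p of (i,j) \<Rightarrow> u!i = v!j" by blast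
    have "u!i = u!(n+i)" if i: "i < n" for i
    proof -
      have "(i,i) \<in> set ?E" "(n+i,i) \<in> set ?E" using i by auto
      then have "u!i = v!i" "u!(n+i) = v!i" using bspec[OF v(2)] by fastforce+
      then show ?thesis by simp
    qed
    then show "u \<in> {u. length u = n+n \<and> (\<forall>i<n. u!i = u!(n+i))}" using v(1) by simp
  next
    fix u assume u: "u \<in> {u. length u = n+n \<and> (\<forall>i<n. u!i = u!(n+i))}"
    then show "u \<in> {u. length u = n+n \<and> (\<exists>v\<in>{v. length v = n}. \<forall>(i,j)\<in>set ?E. u!i = v!j)}"
    proof -
      have "\<forall>p\<in>set ?E. case p of (i,j) \<Rightarrow> u!i = take n u ! j" using u by auto
      moreover have "take n u \<in> {v. length v = n}" using u by simp
      ultimately show ?thesis using u by blast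
    qed
  qed
  show ?thesis by (subst eq[symmetric]) (rule defG[OF Sp_Defs E])
qed

lemma full_measure:
  assumes "alg Sp A" "fap Sp A \<mu>" "D \<in> A" "\<mu> D = 1" "Z \<in> A"
  shows "\<mu> Z = \<mu> (Z \<inter> D)"
proof -
  have ZD: "Z \<inter> D \<in> A" "Z - D \<in> A" using assms by (auto simp: alg_Int alg_Diff)
  have z: "(Z \<inter> D) \<union> (Z - D) = Z" by blast
  have dj: "(Z \<inter> D) \<inter> (Z - D) = {}" by blast
  have e: "\<mu> Z = \<mu> (Z \<inter> D) + \<mu> (Z - D)" using fap_add[OF assms(2) ZD dj] z by simp
  have "Sp - D \<in> A" using assms by (simp add: alg_compl)
  have "\<mu> (Sp - D) = \<mu> Sp - \<mu> D" using fap_diff[OF assms(1,2,3) alg_Sp[OF assms(1)] alg_sub[OF assms(1,3)]] .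
  then have "\<mu> (Sp - D) = 0" using assms(4) fap_Sp[OF assms(2)] by simp
  moreover have "\<mu> (Z - D) \<le> \<mu> (Sp - D)"
    using fap_mono[OF assms(1,2) ZD(2) \<open>Sp - D \<in> A\<close>] alg_sub[OF assms(1,5)] by blast
  moreover have "0 \<le> \<mu> (Z - D)" using fap_nonneg[OF assms(2) ZD(2)] .
  ultimately show ?thesis using e by simp
qed

lemma refl_EA:
  fixes S :: "('f,'r,'u) struc"
  assumes MU: "keisler S n UNIV \<mu>"
  shows "geEA S {} n n \<mu> \<mu>"
proof -
  define dg where "dg = (\<lambda>X :: 'u list set. {v. length v = n \<and> v @ v \<in> X})"
  define l where "l = (\<lambda>X. if X \<in> Defs S (n+n) {} then \<mu> (dg X) else 0)"
  have F: "fap {v. length v = n} (Defs S n UNIV) \<mu>" using keisler_fap[OF MU] .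
  have dgD: "dg X \<in> Defs S n UNIV" if "X \<in> Defs S (n+n) {}" for X
    using Defs_UNIV[OF dg_Defs[OF that]] by (simp add: dg_def)
  have dgSp: "dg {u. length u = n+n} = {v. length v = n}" by (auto simp: dg_def)
  have L: "keisler S (n+n) {} l"
    unfolding keisler_def
  proof (intro conjI ballI impI allI)
    show "l {v. length v = n+n} = 1" using Sp_Defs fap_Sp[OF F] dgSp by (simp add: l_def)
    show "0 \<le> l X" if "X \<in> Defs S (n+n) {}" for X using that dgD[OF that] fap_nonneg[OF F] by (simp add: l_def)
    show "l (X \<union> Y) = l X + l Y" if "X \<in> Defs S (n+n) {}" "Y \<in> Defs S (n+n) {}" "X \<inter> Y = {}" for X Y
    proof -
      have U: "X \<union> Y \<in> Defs S (n+n) {}" using alg_Un[OF alg_Defs that(1,2)] .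
      have "dg (X \<union> Y) = dg X \<union> dg Y" "dg X \<inter> dg Y = {}" using that(3) by (auto simp: dg_def)
      then show ?thesis using U that fap_add[OF F dgD[OF that(1)] dgD[OF that(2)]] by (simp add: l_def)
    qed
    show "l X = 0" if "X \<notin> Defs S (n+n) {}" for X using that by (simp add: l_def)
  qed
  have dgc: "dg (cyl (\<lambda>i. i) n (n+n) X) = X" if "X \<subseteq> {v. length v = n}" for X
  proof -
    have "proj (\<lambda>i. i) n (v @ v) = v" if "length v = n" for v :: "'u list"
      using that by (intro nth_equalityI) (auto simp: nth_append)
    then show ?thesis using that by (auto simp: dg_def cyl_def)
  qed
  have Lx: "pi_x S n n {} l = restr S n {} \<mu>"
  proof (rule ext)
    fix X show "pi_x S n n {} l X = restr S n {} \<mu> X"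
    proof (cases "X \<in> Defs S n {}")
      case True
      have "cyl (\<lambda>i. i) n (n+n) X \<in> Defs S (n+n) {}" using cyl_Defs[OF True] by auto
      then show ?thesis using True dgc[OF Defs_sub[OF True]] by (simp add: pi_x_cyl l_def restr_def)
    next
      case False then show ?thesis by (simp add: pi_x_cyl restr_def)
    qed
  qed
  define D where "D = {u :: 'u list. length u = n+n \<and> (\<forall>i<n. u!i = u!(n+i))}"
  have DD: "D \<in> Defs S (n+n) {}" unfolding D_def by (rule D_Defs)
  have dgDD: "dg D = {v. length v = n}" by (auto simp: dg_def D_def nth_append)
  have main: "pi_y S n n UNIV \<omega> = \<mu>"
    if W: "keisler S (n+n) UNIV \<omega>" "restr S (n+n) {} \<omega> = l" "pi_x S n n UNIV \<omega> = \<mu>" for \<omega>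
  proof (rule ext)
    fix Y
    have FW: "fap {u. length u = n+n} (Defs S (n+n) UNIV) \<omega>" using keisler_fap[OF W(1)] .
    have DU: "D \<in> Defs S (n+n) UNIV" using Defs_UNIV[OF DD] .
    have "\<omega> D = restr S (n+n) {} \<omega> D" using DD by (simp add: restr_def)
    also have "\<dots> = 1" using W(2) DD dgDD fap_Sp[OF F] by (simp add: l_def)
    finally have oD: "\<omega> D = 1" .
    show "pi_y S n n UNIV \<omega> Y = \<mu> Y"
    proof (cases "Y \<in> Defs S n UNIV")
      case True
      define a where "a = cyl (\<lambda>i. i) n (n+n) Y"
      define b where "b = cyl ((+) n) n (n+n) Y"
      have aD: "a \<in> Defs S (n+n) UNIV" unfolding a_def using cyl_Defs[OF True] by auto
      have bD: "b \<in> Defs S (n+n) UNIV" unfolding b_def using cyl_Defs[OF True] by auto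
      have pe: "proj (\<lambda>i. i) n u = proj ((+) n) n u" if "u \<in> D" for u
        using that by (intro nth_equalityI) (auto simp: D_def)
      have "a \<inter> D = b \<inter> D" using pe by (auto simp: a_def b_def cyl_def)
      then have "\<omega> b = \<omega> a"
        using full_measure[OF alg_Defs FW DU oD aD] full_measure[OF alg_Defs FW DU oD bD] by simp
      also have "\<dots> = pi_x S n n UNIV \<omega> Y" using True by (simp add: pi_x_cyl a_def)
      also have "\<dots> = \<mu> Y" using W(3) by simp
      finally show ?thesis using True by (simp add: pi_y_cyl b_def)
    next
      case False
      then show ?thesis using keisler_zero[OF MU False] by (simp add: pi_y_cyl)
    qed
  qed
  show ?thesis unfolding geEA_def using L Lx main by blast
qed

lemma small_empty:
  assumes "monster S \<kappa>" shows "small \<kappa> {}"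
proof -
  have "Card_order \<kappa>" "ordLess2 (card_of (UNIV :: nat set)) \<kappa>" using assms by (auto simp: monster_def)
  then show ?thesis unfolding small_def using card_of_empty ordLeq_ordLess_trans by blast
qed

lemma small_Un:
  assumes "monster S \<kappa>" "small \<kappa> A" "small \<kappa> B" shows "small \<kappa> (A \<union> B)"
proof -
  have c: "Card_order \<kappa>" "ordLess2 (card_of (UNIV :: nat set)) \<kappa>" using assms by (auto simp: monster_def)
  have inf: "\<not> finite (Field \<kappa>)"
    using c by (metis Field_card_of card_of_mono2 infinite_iff_card_of_nat ordLess_imp_ordLeq)
  show ?thesis using assms(2,3) card_of_Un_ordLess_infinite_Field[OF inf c(1)] by (simp add: small_def)
qed

theorem theorem3p13:
  fixes S :: "('f, 'r, 'u) struc" and \<kappa> :: "'k rel"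
  assumes "monster S \<kappa>"
  shows "(\<forall>n \<mu>. keisler S n UNIV \<mu> \<longrightarrow> geE S \<kappa> n n \<mu> \<mu>) \<and>
         (\<forall>n m k \<mu> \<nu> \<eta>. keisler S n UNIV \<mu> \<and> keisler S m UNIV \<nu> \<and> keisler S k UNIV \<eta> \<and>
            geE S \<kappa> n m \<mu> \<nu> \<and> geE S \<kappa> m k \<nu> \<eta> \<longrightarrow> geE S \<kappa> n k \<mu> \<eta>)"
proof (intro conjI allI impI)
  fix n \<mu> assume "keisler S n UNIV \<mu>"
  then show "geE S \<kappa> n n \<mu> \<mu>" unfolding geE_def using refl_EA small_empty[OF assms] by blast
next
  fix n m k \<mu> \<nu> \<eta>
  assume h: "keisler S n UNIV \<mu> \<and> keisler S m UNIV \<nu> \<and> keisler S k UNIV \<eta> \<and>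
            geE S \<kappa> n m \<mu> \<nu> \<and> geE S \<kappa> m k \<nu> \<eta>"
  then obtain A B where AB: "small \<kappa> A" "geEA S A n m \<mu> \<nu>" "small \<kappa> B" "geEA S B m k \<nu> \<eta>"
    unfolding geE_def by blast
  have "geEA S (A \<union> B) n k \<mu> \<eta>" using trans_EA[OF _ _ _ AB(2) AB(4)] h by blast
  moreover have "small \<kappa> (A \<union> B)" using small_Un[OF assms AB(1,3)] .
  ultimately show "geE S \<kappa> n k \<mu> \<eta>" unfolding geE_def by blast
qed

end
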